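(* Let $a=\{a_1,\dots,a_m\}$ be a set of positive rational numbers different from $1$. Then there exist integers $b_1,b_2,\dots$ (depending only on $a$ and the index, not on $t$) such that, as formal power series in $x$ with coefficients in $\mathbb{Q}[t]$, $$\sum_{n\ge 0}\chi_{\mathcal{A}_n(a)}(t)\frac{x^n}{n!}=\exp\Big[\sum_{n\ge 1}b_n(t-1)\frac{x^n}{n!}\Big].$$ Moreover, for fixed $m$ and $n$, the integer $b_n$ is the same for all multiplicatively independent sets $a$ of size $m$.
   Context: A set $\{a_1,\dots,a_m\}$ of positive rational numbers is multiplicatively independent if $a_1^{i_1}\cdots a_m^{i_m}=1$ with integers $i_1,\dots,i_m$ implies $i_1=\dots=i_m=0$. For a set $a=\{a_1,\dots,a_m\}$ of positive rational numbers different from $1$ and $n\ge 1$, $\mathcal{A}_n(a)$ denotes the hyperplane arrangement in $\mathbb{R}^n$ consisting of the hyperplanes $x_i=0$ ($1\le i\le n$), $x_i=x_j$ ($1\le i<j\le n$), and $x_i=a_rx_j$ ($1\le i\neq j\le n$, $1\le r\le m$); $\mathcal{A}_0(a)$ is the empty arrangement in $\mathbb{R}^0$, with characteristic polynomial $1$. For a finite arrangement $\mathcal{A}$ of affine hyperplanes in $\mathbb{R}^n$, the characteristic polynomial is $\chi_{\mathcal{A}}(t)=\sum_{\mathcal{B}}(-1)^{\#\mathcal{B}}t^{n-\operatorname{rank}(\mathcal{B})}$, the sum over subsets $\mathcal{B}\subseteq\mathcal{A}$ whose hyperplanes have nonempty common intersection, where $\operatorname{rank}(\mathcal{B})$ is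 the dimension of the span of the normal vectors of the hyperplanes in $\mathcal{B}$. *)

theory Defs
  imports "HOL-Analysis.Analysis" "HOL-Library.Function_Algebras"
    "HOL-Computational_Algebra.Formal_Power_Series"
    "HOL-Computational_Algebra.Polynomial"
begin

text \<open>Points of R^n are modelled as functions nat => real vanishing outside {0..<n}
  (coordinates are indexed 0..n-1 instead of 1..n).\<close>

definition Rn :: "nat \<Rightarrow> (nat \<Rightarrow> real) set" where
  "Rn n = {x. \<forall>i\<ge>n. x i = 0}"

definition dotn :: "nat \<Rightarrow> (nat \<Rightarrow> real) \<Rightarrow> (nat \<Rightarrow> real) \<Rightarrow> real" where
  "dotn n c x = (\<Sum>i<n. c i * x i)"

definition hyp :: "nat \<Rightarrow> (nat \<Rightarrow> real) \<Rightarrow> real \<Rightarrow> (nat \<Rightarrow> real) set" where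
  "hyp n c d = {x \<in> Rn n. dotn n c x = d}"

definition vscale :: "real \<Rightarrow> (nat \<Rightarrow> real) \<Rightarrow> (nat \<Rightarrow> real)" where
  "vscale r f = (\<lambda>i. r * f i)"

definition normals :: "nat \<Rightarrow> (nat \<Rightarrow> real) set set \<Rightarrow> (nat \<Rightarrow> real) set" where
  "normals n B = {c \<in> Rn n. c \<noteq> 0 \<and> (\<exists>d. hyp n c d \<in> B)}"

definition arr_rank :: "nat \<Rightarrow> (nat \<Rightarrow> real) set set \<Rightarrow> nat" where
  "arr_rank n B = vector_space.dim vscale (normals n B)"

definition char_poly :: "nat \<Rightarrow> (nat \<Rightarrow> real) set set \<Rightarrow> rat poly" where
  "char_poly n A = (\<Sum>B\<in>{B. B \<subseteq> A \<and> Rn n \<inter> \<Inter>B \<noteq> {}}.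
      (-1) ^ card B * monom 1 (n - arr_rank n B))"

definition unitv :: "nat \<Rightarrow> nat \<Rightarrow> real" where
  "unitv i = (\<lambda>k. if k = i then 1 else 0)"

definition arrA :: "nat \<Rightarrow> rat set \<Rightarrow> (nat \<Rightarrow> real) set set" where
  "arrA n a =
     {hyp n (unitv i) 0 | i. i < n}
   \<union> {hyp n (\<lambda>k. unitv i k - unitv j k) 0 | i j. i < j \<and> j < n}
   \<union> {hyp n (\<lambda>k. unitv i k - real_of_rat r * unitv j k) 0 | i j r. i < n \<and> j < n \<and> i \<noteq> j \<and> r \<in> a}"

definition mult_indep :: "rat set \<Rightarrow> bool" where
  "mult_indep a \<longleftrightarrow> (\<forall>e :: rat \<Rightarrow> int. (\<Prod>r\<in>a. r powi e r) = 1 \<longrightarrow> (\<forall>r\<in>a. e r = 0))"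

text \<open>Exponential of a power series over Q[t] with zero constant term: exp(G) = sum_k G^k/k!.\<close>
definition fps_exp_of :: "rat poly fps \<Rightarrow> rat poly fps" where
  "fps_exp_of G = fps_compose (Abs_fps (\<lambda>k. [:inverse (fact k):])) G"

definition char_egf :: "rat set \<Rightarrow> rat poly fps" where
  "char_egf a = Abs_fps (\<lambda>n. smult (inverse (fact n)) (char_poly n (arrA n a)))"

definition b_series :: "(nat \<Rightarrow> int) \<Rightarrow> rat poly fps" where
  "b_series b = Abs_fps (\<lambda>n. if n = 0 then 0 else smult (of_int (b n) / fact n) [:-1, 1:])"

end

theory Submission
  imports Defs
begin

interpretation V: vector_space vscale
  by unfold_locales (auto simp: vscale_def fun_eq_iff algebra_simps)

lemma vscale_apply: "vscale r f i = r * f i" by (simp add: vscale_def)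

lemma fin_dim_mono:
  assumes "finite W" "X \<subseteq> V.span W" shows "V.dim X \<le> V.dim W"
proof -
  obtain B where B: "B \<subseteq> W" "V.independent B" "W \<subseteq> V.span B" "card B = V.dim W"
    using V.basis_exists by blast
  have "X \<subseteq> V.span B" using assms(2) B(3)
    by (metis V.span_mono V.span_span order_trans)
  moreover have "finite B" using B(1) assms(1) finite_subset by blast
  ultimately show ?thesis using V.dim_le_card B(4) by metis
qed

lemma dim_insert_in: "x \<in> V.span S \<Longrightarrow> V.dim (insert x S) = V.dim S"
  by (metis V.span_eq_dim V.span_redundant)

lemma fin_basis:
  assumes "finite S"
  obtains B where "B \<subseteq> S" "V.independent B" "V.span B = V.span S" "card B = V.dim S" "finite B"
proof -
  obtain B where B: "B \<subseteq> S" "V.independent B" "S \<subseteq> V.span B" "card B = V.dim S"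
    using V.basis_exists by blast
  have spB: "V.span B = V.span S"
    using B by (metis V.span_mono V.span_span subset_antisym)
  show ?thesis using that B spB finite_subset[OF B(1) assms] by blast
qed

lemma dim_insert_notin:
  assumes "finite S" "x \<notin> V.span S" shows "V.dim (insert x S) = V.dim S + 1"
proof -
  obtain B where B: "B \<subseteq> S" "V.independent B" "V.span B = V.span S" "card B = V.dim S" "finite B"
    using fin_basis[OF assms(1)] by blast
  have xB: "x \<notin> V.span B" using B(3) assms by simp
  have ind: "V.independent (insert x B)" using V.independent_insertI[OF xB B(2)] .
  have sp: "V.span (insert x B) = V.span (insert x S)"
    using B(3) by (metis V.span_insert)
  have "x \<notin> B" using xB V.span_base by blast
  then have "card (insert x B) = card B + 1" using B(5) by simp
  then show ?thesis using V.dim_eq_card[OF sp ind] B(4) by simp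
qed

lemma dim_insert_le:
  assumes "finite S" shows "V.dim (insert x S) \<le> V.dim S + 1"
  using dim_insert_notin[OF assms] dim_insert_in[of x S] by (cases "x \<in> V.span S") auto

lemma indep_Un:
  assumes "V.independent X" "V.independent Y" "finite Y" "V.span X \<inter> V.span Y \<subseteq> {0}"
  shows "V.independent (X \<union> Y)"
  using assms(3,2,4)
proof (induction Y rule: finite_induct)
  case empty then show ?case using assms(1) by simp
next
  case (insert y Y)
  have iY: "V.independent Y" and yY: "y \<notin> V.span Y"
    using insert.prems(1) insert.hyps(2) V.independent_insert by auto
  have "V.span Y \<subseteq> V.span (insert y Y)" by (simp add: V.span_mono subset_insertI)
  then have IH: "V.independent (X \<union> Y)" using insert.IH iY insert.prems(2) by blast
  have "y \<notin> V.span (X \<union> Y)"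
  proof
    assume "y \<in> V.span (X \<union> Y)"
    then obtain u w where uw: "y = u + w" "u \<in> V.span X" "w \<in> V.span Y"
      unfolding V.span_Un by blast
    have "w \<in> V.span (insert y Y)" using uw(3) V.span_mono[of Y "insert y Y"] by blast
    moreover have "y \<in> V.span (insert y Y)" by (simp add: V.span_base)
    ultimately have "u \<in> V.span (insert y Y)" using uw(1) V.span_diff[of y _ w] by force
    then have "u = 0" using uw(2) insert.prems(2) by blast
    then show False using uw yY by simp
  qed
  then show ?case using V.independent_insertI[OF _ IH] by simp
qed

lemma dim_Un_disj:
  assumes "finite A" "finite B" "V.span A \<inter> V.span B \<subseteq> {0}"
  shows "V.dim (A \<union> B) = V.dim A + V.dim B"
proof -
  obtain BA where BA: "BA \<subseteq> A" "V.independent BA" "V.span BA = V.span A" "card BA = V.dim A" "finite BA"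
    using fin_basis[OF assms(1)] by blast
  obtain BB where BB: "BB \<subseteq> B" "V.independent BB" "V.span BB = V.span B" "card BB = V.dim B" "finite BB"
    using fin_basis[OF assms(2)] by blast
  have ind: "V.independent (BA \<union> BB)" using indep_Un[OF BA(2) BB(2) BB(5)] assms(3) BA(3) BB(3) by simp
  have sp: "V.span (BA \<union> BB) = V.span (A \<union> B)" unfolding V.span_Un BA(3) BB(3) ..
  have disj: "BA \<inter> BB = {}"
  proof -
    have "BA \<inter> BB \<subseteq> {0}" using assms(3) BA(3) BB(3) V.span_superset by blast
    moreover have "0 \<notin> BA" using BA(2) V.dependent_zero by blast
    ultimately show ?thesis by blast
  qed
  show ?thesis using V.dim_eq_card[OF sp ind] card_Un_disjoint[OF BA(5) BB(5) disj] BA(4) BB(4) by simp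
qed

definition supp_in :: "nat set \<Rightarrow> (nat \<Rightarrow> real) set" where
  "supp_in S = {x. \<forall>i. i \<notin> S \<longrightarrow> x i = 0}"

lemma subspace_supp_in: "V.subspace (supp_in S)"
  unfolding V.subspace_def supp_in_def by (auto simp: vscale_def)

lemma span_supp_in: "X \<subseteq> supp_in S \<Longrightarrow> V.span X \<subseteq> supp_in S"
  using V.span_minimal subspace_supp_in by blast

lemma supp_in_disj: "S \<inter> R = {} \<Longrightarrow> supp_in S \<inter> supp_in R \<subseteq> {0}"
  unfolding supp_in_def by (auto simp: fun_eq_iff) (metis disjoint_iff)

lemma unitv_supp: "i \<in> S \<Longrightarrow> unitv i \<in> supp_in S"
  by (auto simp: supp_in_def unitv_def)

lemma indep_unitv: "finite S \<Longrightarrow> V.independent (unitv ` S)"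
proof (induction S rule: finite_induct)
  case empty then show ?case using V.independent_empty by simp
next
  case (insert i S)
  have "V.span (unitv ` S) \<subseteq> supp_in S"
    by (rule span_supp_in) (auto intro: unitv_supp)
  moreover have "unitv i \<notin> supp_in S" using insert.hyps(2) by (auto simp: supp_in_def unitv_def)
  ultimately have "unitv i \<notin> V.span (unitv ` S)" by blast
  then show ?case using V.independent_insertI[OF _ insert.IH] by simp
qed

lemma inj_unitv: "inj unitv"
  by (auto simp: inj_def unitv_def fun_eq_iff split: if_splits)

lemma dim_unitv: "finite S \<Longrightarrow> V.dim (unitv ` S) = card S"
  using V.dim_eq_card_independent[OF indep_unitv] card_image[OF inj_on_subset[OF inj_unitv]] by simp

lemma dim_linear_image:
  assumes "Vector_Spaces.linear vscale vscale T" "finite S" "inj_on T (V.span S)"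
  shows "V.dim (T ` S) = V.dim S"
proof -
  interpret T: Vector_Spaces.linear vscale vscale T by fact
  obtain B where B: "B \<subseteq> S" "V.independent B" "V.span B = V.span S" "card B = V.dim S" "finite B"
    using fin_basis[OF assms(2)] by blast
  have injB: "inj_on T (V.span B)" using assms(3) B(3) by simp
  have ind: "V.independent (T ` B)" using T.independent_injective_image[OF B(2) injB] .
  have sp: "V.span (T ` B) = V.span (T ` S)" using T.span_image B(3) by simp
  have "card (T ` B) = card B"
    using card_image inj_on_subset[OF injB V.span_superset] by blast
  then show ?thesis using V.dim_eq_card[OF sp ind] B(4) by simp
qed

type_synonym lab = "nat + nat \<times> nat \<times> rat"

fun nv :: "lab \<Rightarrow> nat \<Rightarrow> real" where
  "nv (Inl i) = unitv i"
| "nv (Inr (i,j,r)) = (\<lambda>k. unitv i k - real_of_rat r * unitv j k)"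

definition LD :: "rat set \<Rightarrow> nat set \<Rightarrow> lab set" where
  "LD Q S = Inl ` S \<union> Inr ` {(i,j,r). i \<in> S \<and> j \<in> S \<and> i < j \<and> r \<in> Q}"

definition rk :: "lab set \<Rightarrow> nat" where "rk K = V.dim (nv ` K)"

definition adjL :: "lab set \<Rightarrow> nat \<Rightarrow> nat \<Rightarrow> bool" where
  "adjL K i j \<longleftrightarrow> (\<exists>r. Inr (i,j,r) \<in> K \<or> Inr (j,i,r) \<in> K)"

definition conn :: "lab set \<Rightarrow> nat \<Rightarrow> nat set \<Rightarrow> bool" where
  "conn K v S \<longleftrightarrow> (\<forall>i\<in>S. (adjL K)\<^sup>*\<^sup>* v i)"

definition wt :: "nat \<Rightarrow> lab set \<Rightarrow> rat poly" where
  "wt n K = (-1) ^ card K * monom 1 (n - rk K)"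

definition chiS :: "rat set \<Rightarrow> nat set \<Rightarrow> rat poly" where
  "chiS Q S = (\<Sum>K\<in>Pow (LD Q S). wt (card S) K)"

definition fS :: "rat set \<Rightarrow> nat \<Rightarrow> nat set \<Rightarrow> rat poly" where
  "fS Q v S = (\<Sum>K\<in>{K. K \<subseteq> LD Q S \<and> conn K v S}. wt (card S) K)"

lemma finite_LD: "finite Q \<Longrightarrow> finite S \<Longrightarrow> finite (LD Q S)"
proof -
  assume "finite Q" "finite S"
  then have "finite (S \<times> S \<times> Q)" by simp
  moreover have "{(i,j,r). i \<in> S \<and> j \<in> S \<and> i < j \<and> r \<in> Q} \<subseteq> S \<times> S \<times> Q" by auto
  ultimately show ?thesis using \<open>finite S\<close> unfolding LD_def by (meson finite_Un finite_imageI finite_subset)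
qed

lemma nv_Inr[simp]: "nv (Inr (i,j,r)) = unitv i - vscale (real_of_rat r) (unitv j)"
  by (simp add: fun_eq_iff vscale_def)
declare nv.simps(2)[simp del]

lemma nv_in_span: "x \<in> LD Q S \<Longrightarrow> nv x \<in> V.span (unitv ` S)"
proof -
  assume "x \<in> LD Q S"
  then consider i where "x = Inl i" "i \<in> S" | i j r where "x = Inr (i,j,r)" "i \<in> S" "j \<in> S"
    unfolding LD_def by blast
  then show ?thesis
  proof cases
    case 1 then show ?thesis by (simp add: V.span_base)
  next
    case 2
    have "unitv i \<in> V.span (unitv ` S)" "unitv j \<in> V.span (unitv ` S)"
      using 2 by (simp_all add: V.span_base)
    then show ?thesis unfolding 2(1) nv_Inr by (intro V.span_diff V.span_scale)
  qed
qed

lemma nv_supp: "x \<in> LD Q S \<Longrightarrow> nv x \<in> supp_in S"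
  unfolding LD_def by (auto simp: supp_in_def unitv_def vscale_def)

lemma rk_le: "finite S \<Longrightarrow> K \<subseteq> LD Q S \<Longrightarrow> rk K \<le> card S"
proof -
  assume fS: "finite S" and K: "K \<subseteq> LD Q S"
  have "nv ` K \<subseteq> V.span (unitv ` S)" using nv_in_span K by blast
  then have "V.dim (nv ` K) \<le> V.dim (unitv ` S)" using fin_dim_mono fS by blast
  then show ?thesis unfolding rk_def using dim_unitv[OF fS] by simp
qed

lemma finite_sub_LD: "finite Q \<Longrightarrow> finite S \<Longrightarrow> K \<subseteq> LD Q S \<Longrightarrow> finite K"
  using finite_LD finite_subset by blast

lemma rk_Un:
  assumes "finite Q" "finite S" "finite R" "S \<inter> R = {}" "K1 \<subseteq> LD Q S" "K2 \<subseteq> LD Q R"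
  shows "rk (K1 \<union> K2) = rk K1 + rk K2"
proof -
  have "V.span (nv ` K1) \<subseteq> supp_in S" using nv_supp assms(5) by (intro span_supp_in) blast
  moreover have "V.span (nv ` K2) \<subseteq> supp_in R" using nv_supp assms(6) by (intro span_supp_in) blast
  ultimately have "V.span (nv ` K1) \<inter> V.span (nv ` K2) \<subseteq> {0}" using supp_in_disj[OF assms(4)] by blast
  moreover have "finite (nv ` K1)" "finite (nv ` K2)"
    using finite_sub_LD[OF assms(1,2,5)] finite_sub_LD[OF assms(1,3,6)] by blast+
  ultimately show ?thesis unfolding rk_def image_Un using dim_Un_disj by blast
qed

lemma reach_span:
  assumes "\<forall>r\<in>Q. r \<noteq> 0" "K \<subseteq> LD Q S" "(adjL K)\<^sup>*\<^sup>* v i"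
  shows "unitv i \<in> V.span (insert (unitv v) (nv ` K))"
  using assms(3)
proof (induction rule: rtranclp_induct)
  case base then show ?case by (simp add: V.span_base)
next
  case (step y z)
  let ?W = "insert (unitv v) (nv ` K)"
  from step.hyps(2) obtain r where "Inr (y,z,r) \<in> K \<or> Inr (z,y,r) \<in> K" unfolding adjL_def by blast
  then show ?case
  proof
    assume h: "Inr (y,z,r) \<in> K"
    then have "r \<in> Q" using assms(2) unfolding LD_def by auto
    then have r0: "real_of_rat r \<noteq> 0" using assms(1) by simp
    have "nv (Inr (y,z,r)) \<in> V.span ?W" by (intro V.span_base insertI2 imageI h)
    then have "unitv y - nv (Inr (y,z,r)) \<in> V.span ?W" using step.IH V.span_diff by blast
    then have "vscale (inverse (real_of_rat r)) (unitv y - nv (Inr (y,z,r))) \<in> V.span ?W"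
      using V.span_scale by blast
    moreover have "vscale (inverse (real_of_rat r)) (unitv y - nv (Inr (y,z,r))) = unitv z"
      using r0 unfolding nv_Inr by (auto simp: fun_eq_iff vscale_def unitv_def)
    ultimately show ?thesis by simp
  next
    assume h: "Inr (z,y,r) \<in> K"
    have "nv (Inr (z,y,r)) \<in> V.span ?W" by (intro V.span_base insertI2 imageI h)
    moreover have "vscale (real_of_rat r) (unitv y) \<in> V.span ?W" using step.IH V.span_scale by blast
    ultimately have "nv (Inr (z,y,r)) + vscale (real_of_rat r) (unitv y) \<in> V.span ?W" using V.span_add by blast
    moreover have "nv (Inr (z,y,r)) + vscale (real_of_rat r) (unitv y) = unitv z"
      unfolding nv_Inr by (auto simp: fun_eq_iff vscale_def unitv_def)
    ultimately show ?thesis by simp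
  qed
qed

lemma rk_conn_ge:
  assumes "\<forall>r\<in>Q. r \<noteq> 0" "finite Q" "finite S" "K \<subseteq> LD Q S" "conn K v S"
  shows "card S \<le> rk K + 1"
proof -
  have "unitv ` S \<subseteq> V.span (insert (unitv v) (nv ` K))"
    using reach_span[OF assms(1,4)] assms(5) unfolding conn_def by blast
  moreover have fK: "finite (nv ` K)" using finite_sub_LD[OF assms(2,3,4)] by blast
  ultimately have "V.dim (unitv ` S) \<le> V.dim (insert (unitv v) (nv ` K))"
    using fin_dim_mono[of "insert (unitv v) (nv ` K)"] by blast
  also have "\<dots> \<le> V.dim (nv ` K) + 1"
    using dim_insert_le[OF fK] by blast
  finally show ?thesis using dim_unitv[OF assms(3)] unfolding rk_def by simp
qed

lemma LD_Inl[simp]: "Inl i \<in> LD Q S \<longleftrightarrow> i \<in> S"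
  unfolding LD_def by auto
lemma LD_Inr[simp]: "Inr (i,j,r) \<in> LD Q S \<longleftrightarrow> i \<in> S \<and> j \<in> S \<and> i < j \<and> r \<in> Q"
  unfolding LD_def by auto

lemma LD_mono: "S \<subseteq> I \<Longrightarrow> LD Q S \<subseteq> LD Q I"
proof
  fix x assume "S \<subseteq> I" "x \<in> LD Q S" then show "x \<in> LD Q I" by (cases x) auto
qed

lemma LD_disj: "S \<inter> R = {} \<Longrightarrow> LD Q S \<inter> LD Q R = {}"
proof -
  assume "S \<inter> R = {}"
  { fix x assume "x \<in> LD Q S" "x \<in> LD Q R" then have False using \<open>S \<inter> R = {}\<close> by (cases x) auto }
  then show ?thesis by blast
qed

lemma adjL_sym: "adjL K i j = adjL K j i" unfolding adjL_def by blast

lemma adjL_mono: "K \<subseteq> K' \<Longrightarrow> adjL K i j \<Longrightarrow> adjL K' i j" unfolding adjL_def by blast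

lemma reach_mono: "K \<subseteq> K' \<Longrightarrow> (adjL K)\<^sup>*\<^sup>* i j \<Longrightarrow> (adjL K')\<^sup>*\<^sup>* i j"
  by (metis adjL_mono mono_rtranclp)

definition compo :: "lab set \<Rightarrow> nat \<Rightarrow> nat set" where
  "compo K v = {i. (adjL K)\<^sup>*\<^sup>* v i}"

lemma adjL_in: "K \<subseteq> LD Q S \<Longrightarrow> adjL K y z \<Longrightarrow> y \<in> S \<and> z \<in> S"
  unfolding adjL_def by auto

lemma reach_in: "K \<subseteq> LD Q S \<Longrightarrow> v \<in> S \<Longrightarrow> (adjL K)\<^sup>*\<^sup>* v i \<Longrightarrow> i \<in> S"
  by (erule rtranclp_induct) (auto dest: adjL_in)

lemma comp_sub: "K \<subseteq> LD Q S \<Longrightarrow> v \<in> S \<Longrightarrow> compo K v \<subseteq> S"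
  unfolding compo_def using reach_in by blast

lemma comp_v: "v \<in> compo K v" unfolding compo_def by simp

lemma reach_restrict:
  assumes "K \<subseteq> LD Q I" "(adjL K)\<^sup>*\<^sup>* v i"
  shows "(adjL (K \<inter> LD Q (compo K v)))\<^sup>*\<^sup>* v i"
  using assms(2)
proof (induction rule: rtranclp_induct)
  case base then show ?case by simp
next
  case (step y z)
  have yS: "y \<in> compo K v" and zS: "z \<in> compo K v"
    using step.hyps unfolding compo_def by auto
  from step.hyps(2) obtain r where "Inr (y,z,r) \<in> K \<or> Inr (z,y,r) \<in> K" unfolding adjL_def by blast
  then have "adjL (K \<inter> LD Q (compo K v)) y z"
  proof
    assume h: "Inr (y,z,r) \<in> K"
    then have "Inr (y,z,r) \<in> LD Q (compo K v)" using assms(1) yS zS by auto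
    then show ?thesis using h unfolding adjL_def by blast
  next
    assume h: "Inr (z,y,r) \<in> K"
    then have "Inr (z,y,r) \<in> LD Q (compo K v)" using assms(1) yS zS by auto
    then show ?thesis using h unfolding adjL_def by blast
  qed
  then show ?case using step.IH by simp
qed

lemma reach_stay:
  assumes "K1 \<subseteq> LD Q S" "K2 \<subseteq> LD Q R" "S \<inter> R = {}" "v \<in> S"
    "(adjL (K1 \<union> K2))\<^sup>*\<^sup>* v i"
  shows "i \<in> S"
  using assms(5)
proof (induction rule: rtranclp_induct)
  case base then show ?case using assms(4) by simp
next
  case (step y z)
  from step.hyps(2) obtain r where h: "Inr (y,z,r) \<in> K1 \<union> K2 \<or> Inr (z,y,r) \<in> K1 \<union> K2"
    unfolding adjL_def by blast
  have yR: "y \<notin> R" using step.IH assms(3) by blast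
  have "Inr (y,z,r) \<notin> K2" "Inr (z,y,r) \<notin> K2" using yR assms(2) LD_Inr by blast+
  then have "Inr (y,z,r) \<in> K1 \<or> Inr (z,y,r) \<in> K1" using h by blast
  then show ?case using assms(1) by auto
qed

lemma wt_Un:
  assumes "finite Q" "finite S" "finite R" "S \<inter> R = {}" "K1 \<subseteq> LD Q S" "K2 \<subseteq> LD Q R"
  shows "wt (card (S \<union> R)) (K1 \<union> K2) = wt (card S) K1 * wt (card R) K2"
proof -
  have d: "K1 \<inter> K2 = {}" using LD_disj[OF assms(4)] assms(5,6) by blast
  have c: "card (K1 \<union> K2) = card K1 + card K2"
    using card_Un_disjoint[OF finite_sub_LD[OF assms(1,2,5)] finite_sub_LD[OF assms(1,3,6)] d] .
  have r: "rk (K1 \<union> K2) = rk K1 + rk K2" using rk_Un[OF assms] .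
  have cS: "card (S \<union> R) = card S + card R" using card_Un_disjoint[OF assms(2,3,4)] .
  have le1: "rk K1 \<le> card S" using rk_le[OF assms(2,5)] .
  have le2: "rk K2 \<le> card R" using rk_le[OF assms(3,6)] .
  have e: "card (S \<union> R) - rk (K1 \<union> K2) = (card S - rk K1) + (card R - rk K2)"
    using cS r le1 le2 by simp
  show ?thesis unfolding wt_def c e power_add using mult_monom[of "1::rat" "card S - rk K1" 1 "card R - rk K2"]
    by (simp add: algebra_simps)
qed

lemma chi_rec:
  assumes fQ: "finite Q" and fI: "finite I" and vI: "v \<in> I"
  shows "chiS Q I = (\<Sum>S\<in>{S. v \<in> S \<and> S \<subseteq> I}. fS Q v S * chiS Q (I - S))"
proof -
  let ?SS = "{S. v \<in> S \<and> S \<subseteq> I}"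
  have fSS: "finite ?SS" using fI by (rule rev_finite_subset[OF finite_Pow_iff[THEN iffD2]]) auto
  have fP: "finite (Pow (LD Q I))" using finite_LD[OF fQ fI] by simp
  have img: "(\<lambda>K. compo K v) ` Pow (LD Q I) \<subseteq> ?SS"
    using comp_sub vI comp_v by blast
  have "chiS Q I = (\<Sum>S\<in>?SS. \<Sum>K\<in>{K. K \<in> Pow (LD Q I) \<and> compo K v = S}. wt (card I) K)"
    unfolding chiS_def using sum.group[OF fP fSS img, of "wt (card I)"] by simp
  also have "\<dots> = (\<Sum>S\<in>?SS. fS Q v S * chiS Q (I - S))"
  proof (rule sum.cong[OF refl])
    fix S assume "S \<in> ?SS"
    then have vS: "v \<in> S" and SI: "S \<subseteq> I" by auto
    let ?R = "I - S"
    have fS': "finite S" "finite ?R" using fI SI finite_subset by auto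
    have disj: "S \<inter> ?R = {}" by blast
    have cI: "S \<union> ?R = I" using SI by blast
    let ?A = "{K. K \<subseteq> LD Q S \<and> conn K v S}" and ?B = "Pow (LD Q ?R)"
    let ?F = "{K. K \<in> Pow (LD Q I) \<and> compo K v = S}"
    have "fS Q v S * chiS Q ?R = (\<Sum>K1\<in>?A. \<Sum>K2\<in>?B. wt (card S) K1 * wt (card ?R) K2)"
      unfolding fS_def chiS_def sum_product ..
    also have "\<dots> = (\<Sum>(K1,K2)\<in>?A \<times> ?B. wt (card S) K1 * wt (card ?R) K2)"
      by (rule sum.cartesian_product)
    also have "\<dots> = (\<Sum>(K1,K2)\<in>?A \<times> ?B. wt (card I) (K1 \<union> K2))"
    proof (rule sum.cong[OF refl], clarsimp)
      fix K1 K2 assume "K1 \<subseteq> LD Q S" "K2 \<subseteq> LD Q (I - S)"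
      then show "wt (card S) K1 * wt (card (I - S)) K2 = wt (card I) (K1 \<union> K2)"
        using wt_Un[OF fQ fS'(1) fS'(2) disj] cI by simp
    qed
    also have "\<dots> = (\<Sum>K\<in>?F. wt (card I) K)"
    proof -
      have "bij_betw (\<lambda>(K1,K2). K1 \<union> K2) (?A \<times> ?B) ?F"
      proof (rule bij_betwI')
        fix X Y assume "X \<in> ?A \<times> ?B" "Y \<in> ?A \<times> ?B"
        then obtain K1 K2 L1 L2 where XY: "X = (K1,K2)" "Y = (L1,L2)" "K1 \<subseteq> LD Q S" "L1 \<subseteq> LD Q S"
          "K2 \<subseteq> LD Q ?R" "L2 \<subseteq> LD Q ?R" by auto
        have D: "LD Q S \<inter> LD Q ?R = {}" using LD_disj[OF disj] .
        have "K1 \<union> K2 = L1 \<union> L2 \<Longrightarrow> K1 = L1 \<and> K2 = L2"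
        proof -
          assume e: "K1 \<union> K2 = L1 \<union> L2"
          have "K1 = (K1 \<union> K2) \<inter> LD Q S" "L1 = (L1 \<union> L2) \<inter> LD Q S"
            "K2 = (K1 \<union> K2) \<inter> LD Q ?R" "L2 = (L1 \<union> L2) \<inter> LD Q ?R"
            using XY(3-6) D by blast+
          then show ?thesis using e by metis
        qed
        then show "((case X of (K1,K2) \<Rightarrow> K1 \<union> K2) = (case Y of (K1,K2) \<Rightarrow> K1 \<union> K2)) = (X = Y)"
          using XY(1,2) by auto
      next
        fix X assume X: "X \<in> ?A \<times> ?B"
        then obtain K1 K2 where X': "X = (K1,K2)" "K1 \<subseteq> LD Q S" "conn K1 v S" "K2 \<subseteq> LD Q ?R" by auto
        have sub: "K1 \<union> K2 \<subseteq> LD Q I" using X' LD_mono[OF SI] LD_mono[of ?R I] by blast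
        have "compo (K1 \<union> K2) v = S"
        proof
          show "compo (K1 \<union> K2) v \<subseteq> S" unfolding compo_def using reach_stay[OF X'(2) X'(4) disj vS] by blast
          show "S \<subseteq> compo (K1 \<union> K2) v" unfolding compo_def using X'(3) reach_mono[of K1 "K1 \<union> K2"]
            unfolding conn_def by blast
        qed
        then show "(case X of (K1,K2) \<Rightarrow> K1 \<union> K2) \<in> ?F" using X' sub by simp
      next
        fix K assume K: "K \<in> ?F"
        then have KI: "K \<subseteq> LD Q I" and cK: "compo K v = S" by auto
        let ?K1 = "K \<inter> LD Q S" and ?K2 = "K \<inter> LD Q ?R"
        have "K = ?K1 \<union> ?K2"
        proof
          show "K \<subseteq> ?K1 \<union> ?K2"
          proof
            fix x assume xK: "x \<in> K"
            show "x \<in> ?K1 \<union> ?K2"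
            proof (cases x)
              case (Inl i) then show ?thesis using xK KI by auto
            next
              case (Inr p)
              then obtain i j r where p: "x = Inr (i,j,r)" by (cases p) auto
              have "adjL K i j" using xK p unfolding adjL_def by blast
              then have "i \<in> compo K v \<longleftrightarrow> j \<in> compo K v" unfolding compo_def
                by (metis adjL_sym mem_Collect_eq rtranclp.rtrancl_into_rtrancl)
              then show ?thesis using xK KI p cK by auto
            qed
          qed
        qed blast
        moreover have "conn ?K1 v S" unfolding conn_def
          using reach_restrict[OF KI] cK unfolding compo_def by blast
        ultimately show "\<exists>X\<in>?A \<times> ?B. K = (case X of (K1,K2) \<Rightarrow> K1 \<union> K2)"
          by (intro bexI[of _ "(?K1, ?K2)"]) auto
      qed
      note bij = this
      have "(\<Sum>(K1,K2)\<in>?A \<times> ?B. wt (card I) (K1 \<union> K2)) = (\<Sum>x\<in>?A \<times> ?B. wt (card I) ((\<lambda>(K1,K2). K1 \<union> K2) x))"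
        by (rule sum.cong) auto
      then show ?thesis using sum.reindex_bij_betw[OF bij, of "wt (card I)"] by simp
    qed
    finally show "(\<Sum>K\<in>?F. wt (card I) K) = fS Q v S * chiS Q ?R" by simp
  qed
  finally show ?thesis .
qed

definition smono :: "nat \<Rightarrow> (nat \<Rightarrow> nat) \<Rightarrow> bool" where
  "smono k g \<longleftrightarrow> (\<forall>i j. i < j \<longrightarrow> j < k \<longrightarrow> g i < g j)"

lemma enum_exists:
  assumes "finite S" shows "\<exists>g. smono (card S) g \<and> g ` {..<card S} = S"
proof -
  let ?xs = "sorted_list_of_set S"
  have l: "length ?xs = card S" by simp
  have "smono (card S) ((!) ?xs)"
    using strict_sorted_list_of_set[of S] unfolding sorted_wrt_iff_nth_less smono_def l by blast
  moreover have "(!) ?xs ` {..<card S} = S"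
  proof -
    have "set ?xs = S" using assms by simp
    then show ?thesis unfolding set_conv_nth l by auto
  qed
  ultimately show ?thesis by blast
qed

lemma smono_less: assumes "smono k g" "i < k" "j < k" shows "g i < g j \<longleftrightarrow> i < j"
proof (cases "i < j")
  case True then show ?thesis using assms unfolding smono_def by blast
next
  case False
  then have "j < i \<or> j = i" by linarith
  then have "g j < g i \<or> g j = g i" using assms unfolding smono_def by blast
  then show ?thesis using False by linarith
qed

lemma smono_inj: "smono k g \<Longrightarrow> inj_on g {..<k}"
proof (rule inj_onI)
  fix i j assume "smono k g" "i \<in> {..<k}" "j \<in> {..<k}" "g i = g j"
  then show "i = j" using smono_less[of k g i j] smono_less[of k g j i] by (auto simp: linorder_neq_iff)
qed

lemma smono_eq: "smono k g \<Longrightarrow> i < k \<Longrightarrow> j < k \<Longrightarrow> g i = g j \<longleftrightarrow> i = j"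
  using smono_inj[unfolded inj_on_def] by auto

fun rho :: "(nat \<Rightarrow> nat) \<Rightarrow> lab \<Rightarrow> lab" where
  "rho g (Inl i) = Inl (g i)"
| "rho g (Inr (i,j,r)) = Inr (g i, g j, r)"

locale relab =
  fixes k :: nat and g :: "nat \<Rightarrow> nat" and S :: "nat set"
  assumes sm: "smono k g" and im: "g ` {..<k} = S"
begin

lemma gS: "i < k \<Longrightarrow> g i \<in> S" using im by blast

lemma Sg: "m \<in> S \<Longrightarrow> \<exists>i<k. m = g i" using im by auto

lemma rho_LD: "rho g ` LD Q {..<k} = LD Q S"
proof
  show "rho g ` LD Q {..<k} \<subseteq> LD Q S"
  proof
    fix y assume "y \<in> rho g ` LD Q {..<k}"
    then obtain x where x: "x \<in> LD Q {..<k}" "y = rho g x" by blast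
    show "y \<in> LD Q S"
    proof (cases x)
      case (Inl i) then show ?thesis using x gS by auto
    next
      case (Inr p) then obtain i j r where "x = Inr (i,j,r)" by (cases p) auto
      then show ?thesis using x gS smono_less[OF sm] by auto
    qed
  qed
  show "LD Q S \<subseteq> rho g ` LD Q {..<k}"
  proof
    fix y assume y: "y \<in> LD Q S"
    show "y \<in> rho g ` LD Q {..<k}"
    proof (cases y)
      case (Inl m) then obtain i where "i < k" "m = g i" using y Sg by auto
      then have "y = rho g (Inl i)" "Inl i \<in> LD Q {..<k}" using Inl by auto
      then show ?thesis by blast
    next
      case (Inr p) then obtain m1 m2 r where yy: "y = Inr (m1,m2,r)" by (cases p) auto
      then have m: "m1 \<in> S" "m2 \<in> S" "m1 < m2" "r \<in> Q" using y by auto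
      obtain i j where ij: "i < k" "j < k" "m1 = g i" "m2 = g j" using m Sg by metis
      then have "i < j" using m(3) smono_less[OF sm] by auto
      then have "y = rho g (Inr (i,j,r))" "Inr (i,j,r) \<in> LD Q {..<k}" using yy ij m by auto
      then show ?thesis by blast
    qed
  qed
qed

lemma rho_inj: "inj_on (rho g) (LD Q {..<k})"
proof (rule inj_onI)
  fix x y assume x: "x \<in> LD Q {..<k}" and y: "y \<in> LD Q {..<k}" and e: "rho g x = rho g y"
  show "x = y"
  proof (cases x)
    case (Inl i) note xi = this
    show ?thesis
    proof (cases y)
      case (Inl i') then show ?thesis using xi x y e smono_eq[OF sm] by auto
    next
      case (Inr p) then show ?thesis using xi e by (cases p) auto
    qed
  next
    case (Inr p) then obtain i j r where xi: "x = Inr (i,j,r)" by (cases p) auto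
    show ?thesis
    proof (cases y)
      case (Inl i') then show ?thesis using xi e by auto
    next
      case (Inr q) then obtain i' j' r' where "y = Inr (i',j',r')" by (cases q) auto
      then show ?thesis using xi x y e smono_eq[OF sm] by auto
    qed
  qed
qed

definition T :: "(nat \<Rightarrow> real) \<Rightarrow> (nat \<Rightarrow> real)" where
  "T y = (\<lambda>i. if i < k then y (g i) else 0)"

lemma T_lin: "Vector_Spaces.linear vscale vscale T"
  unfolding Vector_Spaces.linear_iff using V.vector_space_axioms
  by (auto simp: T_def fun_eq_iff vscale_def)

lemma T_unitv: "i < k \<Longrightarrow> T (unitv (g i)) = unitv i"
  using smono_eq[OF sm] by (auto simp: T_def unitv_def fun_eq_iff)

lemma T_nv: assumes "x \<in> LD Q {..<k}" shows "T (nv (rho g x)) = nv x"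
proof (cases x)
  case (Inl i) then show ?thesis using assms T_unitv by auto
next
  case (Inr p) then obtain i j r where "x = Inr (i,j,r)" by (cases p) auto
  then show ?thesis using assms smono_eq[OF sm] by (auto simp: T_def fun_eq_iff vscale_def unitv_def)
qed

lemma T_inj: "inj_on T (supp_in S)"
proof -
  interpret TL: Vector_Spaces.linear vscale vscale T by (rule T_lin)
  have "T y = 0 \<Longrightarrow> y \<in> supp_in S \<Longrightarrow> y = 0" for y
  proof -
    assume "T y = 0" "y \<in> supp_in S"
    then have "\<forall>i<k. y (g i) = 0" by (auto simp: T_def fun_eq_iff) (metis)
    then show "y = 0" using \<open>y \<in> supp_in S\<close> Sg unfolding supp_in_def by (auto simp: fun_eq_iff) metis
  qed
  moreover have "V.subspace (supp_in S)" by (rule subspace_supp_in)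
  ultimately show ?thesis
    unfolding inj_on_def
    by (metis TL.diff V.subspace_diff eq_iff_diff_eq_0)
qed

lemma rk_rho:
  assumes "finite Q" "K \<subseteq> LD Q {..<k}" shows "rk (rho g ` K) = rk K"
proof -
  have sub: "rho g ` K \<subseteq> LD Q S" using assms(2) rho_LD by blast
  have fS: "finite S" using im by blast
  have fin: "finite (nv ` rho g ` K)" using finite_sub_LD[OF assms(1) fS sub] by blast
  have "V.span (nv ` rho g ` K) \<subseteq> supp_in S" using nv_supp sub by (intro span_supp_in) blast
  then have inj: "inj_on T (V.span (nv ` rho g ` K))" using T_inj inj_on_subset by blast
  have "T ` nv ` rho g ` K = nv ` K"
    using T_nv assms(2) by (auto simp: image_image) (metis image_eqI subsetD)
  then show ?thesis using dim_linear_image[OF T_lin fin inj] unfolding rk_def by simp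
qed

lemma adjL_rho_fw: "adjL K i j \<Longrightarrow> adjL (rho g ` K) (g i) (g j)"
  unfolding adjL_def by (metis image_eqI rho.simps(2))

lemma rho_Inr_inv: "rho g x = Inr (a,b,r) \<Longrightarrow> \<exists>i j. x = Inr (i,j,r) \<and> a = g i \<and> b = g j"
proof (cases x)
  case (Inl i) then show "rho g x = Inr (a,b,r) \<Longrightarrow> ?thesis" by simp
next
  case (Inr p) then show "rho g x = Inr (a,b,r) \<Longrightarrow> ?thesis" by (cases p) auto
qed

lemma adjL_rho_bw:
  assumes "K \<subseteq> LD Q {..<k}" "adjL (rho g ` K) (g i) m" "i < k"
  shows "\<exists>j<k. m = g j \<and> adjL K i j"
proof -
  from assms(2) obtain r where "Inr (g i, m, r) \<in> rho g ` K \<or> Inr (m, g i, r) \<in> rho g ` K"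
    unfolding adjL_def by blast
  then show ?thesis
  proof
    assume "Inr (g i, m, r) \<in> rho g ` K"
    then obtain x where x: "x \<in> K" "rho g x = Inr (g i, m, r)" by (metis imageE)
    then obtain i' j where xe: "x = Inr (i',j,r)" "g i = g i'" "m = g j" using rho_Inr_inv by blast
    then have lt: "i' < k" "j < k" using x(1) assms(1) by auto
    then have "i' = i" using smono_eq[OF sm lt(1) assms(3)] xe(2) by simp
    then have "adjL K i j" unfolding adjL_def using xe(1) x(1) by blast
    then show ?thesis using xe(3) lt(2) by blast
  next
    assume "Inr (m, g i, r) \<in> rho g ` K"
    then obtain x where x: "x \<in> K" "rho g x = Inr (m, g i, r)" by (metis imageE)
    then obtain i' j where xe: "x = Inr (j,i',r)" "m = g j" "g i = g i'" using rho_Inr_inv by blast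
    then have lt: "i' < k" "j < k" using x(1) assms(1) by auto
    then have "i' = i" using smono_eq[OF sm lt(1) assms(3)] xe(3) by simp
    then have "adjL K i j" unfolding adjL_def using xe(1) x(1) by blast
    then show ?thesis using xe(2) lt(2) by blast
  qed
qed

lemma conn_rho:
  assumes "K \<subseteq> LD Q {..<k}" "v < k"
  shows "conn (rho g ` K) (g v) S \<longleftrightarrow> conn K v {..<k}"
proof
  assume c: "conn (rho g ` K) (g v) S"
  have "(adjL (rho g ` K))\<^sup>*\<^sup>* (g v) m \<Longrightarrow> \<exists>i<k. m = g i \<and> (adjL K)\<^sup>*\<^sup>* v i" for m
  proof (induction rule: rtranclp_induct)
    case base then show ?case using assms(2) by blast
  next
    case (step y z)
    then obtain i where i: "i < k" "y = g i" "(adjL K)\<^sup>*\<^sup>* v i" by blast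
    then obtain j where "j < k" "z = g j" "adjL K i j" using adjL_rho_bw[OF assms(1)] step.hyps(2) by blast
    moreover have "(adjL K)\<^sup>*\<^sup>* v j" using i(3) \<open>adjL K i j\<close> by (rule rtranclp.rtrancl_into_rtrancl)
    ultimately show ?case by blast
  qed
  then show "conn K v {..<k}" unfolding conn_def using c[unfolded conn_def] gS
    by (metis lessThan_iff smono_eq[OF sm])
next
  assume c: "conn K v {..<k}"
  have "(adjL K)\<^sup>*\<^sup>* v i \<Longrightarrow> (adjL (rho g ` K))\<^sup>*\<^sup>* (g v) (g i)" for i
    by (induction rule: rtranclp_induct) (auto intro: adjL_rho_fw rtranclp.rtrancl_into_rtrancl)
  then show "conn (rho g ` K) (g v) S" unfolding conn_def using c[unfolded conn_def] Sg by fastforce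
qed

lemma card_S: "card S = k"
  using card_image[OF smono_inj[OF sm]] im by simp

lemma chiS_relab:
  assumes "finite Q" shows "chiS Q S = chiS Q {..<k}"
proof -
  have "chiS Q S = (\<Sum>K\<in>image (rho g) ` Pow (LD Q {..<k}). wt (card S) K)"
    unfolding chiS_def by (subst image_Pow_surj[OF rho_LD]) (rule refl)
  also have "\<dots> = (\<Sum>K\<in>Pow (LD Q {..<k}). wt (card S) (rho g ` K))"
    by (simp add: sum.reindex[OF inj_on_image_Pow[OF rho_inj]] o_def)
  also have "\<dots> = chiS Q {..<k}"
    unfolding chiS_def wt_def card_S
  proof (rule sum.cong[OF refl])
    fix K assume K: "K \<in> Pow (LD Q {..<k})"
    have "card (rho g ` K) = card K" using card_image inj_on_subset[OF rho_inj] K by blast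
    then show "(-1) ^ card (rho g ` K) * monom 1 (k - rk (rho g ` K)) = (-1) ^ card K * monom 1 (card {..<k} - rk K)"
      using rk_rho[OF assms] K by simp
  qed
  finally show ?thesis .
qed

lemma fS_relab:
  assumes "finite Q" "v < k" shows "fS Q (g v) S = fS Q v {..<k}"
proof -
  have "{K. K \<subseteq> LD Q S \<and> conn K (g v) S} = image (rho g) ` {K. K \<subseteq> LD Q {..<k} \<and> conn K v {..<k}}"
  proof
    show "{K. K \<subseteq> LD Q S \<and> conn K (g v) S} \<subseteq> image (rho g) ` {K. K \<subseteq> LD Q {..<k} \<and> conn K v {..<k}}"
    proof
      fix K' assume "K' \<in> {K. K \<subseteq> LD Q S \<and> conn K (g v) S}"
      then have K': "K' \<subseteq> LD Q S" "conn K' (g v) S" by auto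
      obtain K where K: "K \<subseteq> LD Q {..<k}" "K' = rho g ` K"
        using K'(1) rho_LD by (metis subset_image_iff)
      then show "K' \<in> image (rho g) ` {K. K \<subseteq> LD Q {..<k} \<and> conn K v {..<k}}"
        using conn_rho[OF K(1) assms(2)] K'(2) by blast
    qed
    show "image (rho g) ` {K. K \<subseteq> LD Q {..<k} \<and> conn K v {..<k}} \<subseteq> {K. K \<subseteq> LD Q S \<and> conn K (g v) S}"
      using conn_rho[OF _ assms(2)] rho_LD by blast
  qed
  then have "fS Q (g v) S = (\<Sum>K\<in>image (rho g) ` {K. K \<subseteq> LD Q {..<k} \<and> conn K v {..<k}}. wt (card S) K)"
    unfolding fS_def by simp
  also have "\<dots> = (\<Sum>K\<in>{K. K \<subseteq> LD Q {..<k} \<and> conn K v {..<k}}. wt (card S) (rho g ` K))"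
    using sum.reindex[OF inj_on_subset[OF inj_on_image_Pow[OF rho_inj]], of "{K. K \<subseteq> LD Q {..<k} \<and> conn K v {..<k}}" Q "wt (card S)"]
    by (auto simp: o_def)
  also have "\<dots> = fS Q v {..<k}"
    unfolding fS_def wt_def card_S
  proof (rule sum.cong[OF refl])
    fix K assume K: "K \<in> {K. K \<subseteq> LD Q {..<k} \<and> conn K v {..<k}}"
    have "card (rho g ` K) = card K" using card_image inj_on_subset[OF rho_inj] K by blast
    then show "(-1) ^ card (rho g ` K) * monom 1 (k - rk (rho g ` K)) = (-1) ^ card K * monom 1 (card {..<k} - rk K)"
      using rk_rho[OF assms(1)] K by simp
  qed
  finally show ?thesis .
qed

end

lemma chiS_card: assumes "finite Q" "finite S" shows "chiS Q S = chiS Q {..<card S}"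
proof -
  obtain g where g: "smono (card S) g" "g ` {..<card S} = S" using enum_exists[OF assms(2)] by blast
  interpret relab "card S" g S using g by unfold_locales
  show ?thesis using chiS_relab[OF assms(1)] .
qed

lemma fS_card:
  assumes "finite Q" "finite S" "m \<in> S" "\<forall>i\<in>S. i \<le> m"
  shows "fS Q m S = fS Q (card S - 1) {..<card S}"
proof -
  obtain g where g: "smono (card S) g" "g ` {..<card S} = S" using enum_exists[OF assms(2)] by blast
  interpret relab "card S" g S using g by unfold_locales
  obtain j where j: "j < card S" "m = g j" using Sg assms(3) by blast
  have "j = card S - 1"
  proof (rule ccontr)
    assume "j \<noteq> card S - 1"
    then have "j < card S - 1" using j by simp
    then have "g j < g (card S - 1)" using smono_less[OF g(1)] j by simp
    moreover have "g (card S - 1) \<in> S" using gS j by simp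
    ultimately show False using assms(4) j by fastforce
  qed
  then show ?thesis using fS_relab[OF assms(1)] j by simp
qed

lemma sum_Pow_card:
  assumes "finite A"
  shows "(\<Sum>T\<in>Pow A. h (card T)) = (\<Sum>j\<le>card A. of_nat (card A choose j) * (h j :: 'a::comm_semiring_1))"
proof -
  have img: "card ` Pow A \<subseteq> {..card A}" using assms by (auto intro: card_mono)
  have "(\<Sum>T\<in>Pow A. h (card T)) = (\<Sum>j\<le>card A. \<Sum>T\<in>{T. T \<in> Pow A \<and> card T = j}. h (card T))"
    using sum.group[OF finite_Pow_iff[THEN iffD2, OF assms] finite_atMost img, of "\<lambda>T. h (card T)"] by simp
  also have "\<dots> = (\<Sum>j\<le>card A. of_nat (card A choose j) * h j)"
  proof (rule sum.cong[OF refl])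
    fix j
    have "(\<Sum>T\<in>{T. T \<in> Pow A \<and> card T = j}. h (card T)) = (\<Sum>T\<in>{T. T \<subseteq> A \<and> card T = j}. h j)"
      by (rule sum.cong) auto
    also have "\<dots> = of_nat (card A choose j) * h j" using n_subsets[OF assms, of j] by simp
    finally show "(\<Sum>T\<in>{T. T \<in> Pow A \<and> card T = j}. h (card T)) = of_nat (card A choose j) * h j" .
  qed
  finally show ?thesis .
qed

lemma sum_Pow_alt:
  assumes "finite A" "A \<noteq> {}"
  shows "(\<Sum>T\<in>Pow A. (-1) ^ card T) = (0 :: 'a::comm_ring_1)"
proof -
  have "card A > 0" using assms card_gt_0_iff by blast
  then show ?thesis using sum_Pow_card[OF assms(1), of "\<lambda>j. (-1::'a)^j"] choose_alternating_sum[of "card A"]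
    by (simp add: mult.commute)
qed

lemma LD_empty: "LD Q {} = {}" unfolding LD_def by auto

lemma chiS_empty: "chiS Q {} = 1"
  unfolding chiS_def LD_empty wt_def rk_def by simp

lemma poly_wt1: "poly (wt n K) 1 = (-1) ^ card K"
  unfolding wt_def by (simp add: poly_monom)

lemma chiS_at1: "finite Q \<Longrightarrow> finite I \<Longrightarrow> I \<noteq> {} \<Longrightarrow> poly (chiS Q I) 1 = 0"
proof -
  assume fQ: "finite Q" and fI: "finite I" and ne: "I \<noteq> {}"
  then obtain i where "i \<in> I" by blast
  then have "LD Q I \<noteq> {}" by (metis LD_Inl empty_iff)
  then show ?thesis unfolding chiS_def poly_sum poly_wt1 using sum_Pow_alt finite_LD[OF fQ fI] by blast
qed

definition chi :: "rat set \<Rightarrow> nat \<Rightarrow> rat poly" where "chi Q n = chiS Q {..<n}"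
definition phi :: "rat set \<Rightarrow> nat \<Rightarrow> rat poly" where "phi Q k = fS Q (k - 1) {..<k}"

lemma chi_REC:
  assumes fQ: "finite Q"
  shows "chi Q (Suc n) = (\<Sum>j\<le>n. of_nat (n choose j) * (phi Q (Suc j) * chi Q (n - j)))"
proof -
  let ?I = "{..<Suc n}"
  have "chi Q (Suc n) = (\<Sum>S\<in>{S. n \<in> S \<and> S \<subseteq> ?I}. fS Q n S * chiS Q (?I - S))"
    unfolding chi_def using chi_rec[OF fQ, of ?I n] by simp
  also have "\<dots> = (\<Sum>S\<in>{S. n \<in> S \<and> S \<subseteq> ?I}. phi Q (card S) * chi Q (Suc n - card S))"
  proof (rule sum.cong[OF refl])
    fix S assume S: "S \<in> {S. n \<in> S \<and> S \<subseteq> ?I}"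
    then have fS: "finite S" using finite_subset by blast
    have "fS Q n S = fS Q (card S - 1) {..<card S}"
    proof (rule fS_card[OF fQ fS])
      show "n \<in> S" using S by simp
      show "\<forall>i\<in>S. i \<le> n" using S by (auto simp: subset_iff less_Suc_eq_le)
    qed
    moreover have "chiS Q (?I - S) = chi Q (Suc n - card S)"
      unfolding chi_def using chiS_card[OF fQ, of "?I - S"] S card_Diff_subset[OF fS] by simp
    ultimately show "fS Q n S * chiS Q (?I - S) = phi Q (card S) * chi Q (Suc n - card S)"
      unfolding phi_def by simp
  qed
  also have "\<dots> = (\<Sum>T\<in>Pow {..<n}. phi Q (Suc (card T)) * chi Q (n - card T))"
  proof -
    have bij: "bij_betw (insert n) (Pow {..<n}) {S. n \<in> S \<and> S \<subseteq> ?I}"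
    proof (rule bij_betwI')
      fix X Y assume "X \<in> Pow {..<n}" "Y \<in> Pow {..<n}"
      then show "(insert n X = insert n Y) = (X = Y)" by (metis Pow_iff insert_ident lessThan_iff less_irrefl subsetD)
    next
      fix X assume "X \<in> Pow {..<n}" then show "insert n X \<in> {S. n \<in> S \<and> S \<subseteq> ?I}" by auto
    next
      fix S assume S: "S \<in> {S. n \<in> S \<and> S \<subseteq> ?I}"
      then have "S = insert n (S - {n})" "S - {n} \<in> Pow {..<n}" by auto
      then show "\<exists>X\<in>Pow {..<n}. S = insert n X" by blast
    qed
    have "\<And>T. T \<in> Pow {..<n} \<Longrightarrow> card (insert n T) = Suc (card T)"
      by (metis PowD card_insert_disjoint finite_lessThan finite_subset lessThan_iff less_irrefl subsetD)
    then show ?thesis using sum.reindex_bij_betw[OF bij, of "\<lambda>S. phi Q (card S) * chi Q (Suc n - card S)"]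
      by simp
  qed
  also have "\<dots> = (\<Sum>j\<le>n. of_nat (n choose j) * (phi Q (Suc j) * chi Q (n - j)))"
    using sum_Pow_card[of "{..<n}" "\<lambda>j. phi Q (Suc j) * chi Q (n - j)"] by simp
  finally show ?thesis .
qed

definition CS :: "rat set \<Rightarrow> nat \<Rightarrow> lab set set" where
  "CS Q k = {K. K \<subseteq> LD Q {..<k} \<and> conn K (k - 1) {..<k}}"

definition beta :: "rat set \<Rightarrow> nat \<Rightarrow> int" where
  "beta Q k = (\<Sum>K\<in>{K\<in>CS Q k. rk K \<noteq> k}. (-1) ^ card K)"

definition gamma :: "rat set \<Rightarrow> nat \<Rightarrow> int" where
  "gamma Q k = (\<Sum>K\<in>{K\<in>CS Q k. rk K = k}. (-1) ^ card K)"

lemma finite_CS: "finite Q \<Longrightarrow> finite (CS Q k)"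
  unfolding CS_def using finite_LD[of Q "{..<k}"]
  by (metis (no_types, lifting) Collect_mono Pow_def finite_Pow_iff finite_lessThan rev_finite_subset)

lemma rk_CS:
  assumes "\<forall>r\<in>Q. r \<noteq> 0" "finite Q" "k \<ge> 1" "K \<in> CS Q k"
  shows "rk K = k \<or> rk K + 1 = k"
proof -
  have K: "K \<subseteq> LD Q {..<k}" "conn K (k - 1) {..<k}" using assms(4) unfolding CS_def by auto
  have "rk K \<le> k" using rk_le[OF _ K(1)] by simp
  moreover have "k \<le> rk K + 1" using rk_conn_ge[OF assms(1,2) _ K(1) K(2)] by simp
  ultimately show ?thesis by linarith
qed

lemma neg1_pow_poly: "(-1::rat poly) ^ m = [:(-1) ^ m:]"
  by (induction m) (auto simp: one_pCons)

lemma sum_pCons0: "(\<Sum>x\<in>A. [:f x:]) = [:(\<Sum>x\<in>A. f x)::rat:]"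
  by (induction A rule: infinite_finite_induct) auto

lemma sum_pCons1: "(\<Sum>x\<in>A. [:0, f x:]) = [:0, (\<Sum>x\<in>A. f x)::rat:]"
  by (induction A rule: infinite_finite_induct) auto

lemma phi_split:
  assumes "\<forall>r\<in>Q. r \<noteq> 0" "finite Q" "k \<ge> 1"
  shows "phi Q k = [:of_int (gamma Q k), of_int (beta Q k):]"
proof -
  have "phi Q k = (\<Sum>K\<in>CS Q k. (if rk K = k then [:(-1) ^ card K:] else [:0, (-1) ^ card K:]))"
    unfolding phi_def fS_def CS_def[symmetric]
  proof (rule sum.cong[OF refl])
    fix K assume K: "K \<in> CS Q k"
    show "wt (card {..<k}) K = (if rk K = k then [:(-1) ^ card K:] else [:0, (-1) ^ card K:])"
      using rk_CS[OF assms K] unfolding wt_def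
      by (auto simp: monom_0 monom_Suc neg1_pow_poly)
  qed
  also have "\<dots> = (\<Sum>K\<in>{K\<in>CS Q k. rk K = k}. [:(-1) ^ card K:]) + (\<Sum>K\<in>{K\<in>CS Q k. rk K \<noteq> k}. [:0, (-1) ^ card K:])"
  proof -
    note * = sum.If_cases[OF finite_CS[OF assms(2)], of "\<lambda>K. rk K = k" "\<lambda>K. [:(-1) ^ card K:]" "\<lambda>K. [:0, (-1) ^ card K:]" k]
    have a1: "CS Q k \<inter> {x. rk x = k} = {K\<in>CS Q k. rk K = k}" by auto
    have a2: "CS Q k \<inter> - {x. rk x = k} = {K\<in>CS Q k. rk K \<noteq> k}" by auto
    show ?thesis using * unfolding a1 a2 .
  qed
  also have "\<dots> = [:of_int (gamma Q k), of_int (beta Q k):]"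
    unfolding gamma_def beta_def of_int_sum sum_pCons0 sum_pCons1 by simp
  finally show ?thesis .
qed

lemma phi_at1:
  assumes "\<forall>r\<in>Q. r \<noteq> 0" "finite Q"
  shows "poly (phi Q (Suc n)) 1 = 0"
proof -
  have z: "poly (chi Q m) 1 = 0" if "m \<ge> 1" for m
  proof -
    have "0 \<in> {..<m}" using that by simp
    then have "{..<m} \<noteq> {}" by blast
    then show ?thesis unfolding chi_def using chiS_at1[OF assms(2), of "{..<m}"] by simp
  qed
  have "0 = poly (chi Q (Suc n)) 1" using z by simp
  also have "\<dots> = (\<Sum>j\<le>n. of_nat (n choose j) * (poly (phi Q (Suc j)) 1 * poly (chi Q (n - j)) 1))"
    unfolding chi_REC[OF assms(2)] poly_sum poly_mult by (simp add: of_nat_poly)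
  also have "\<dots> = (\<Sum>j<Suc n. of_nat (n choose j) * (poly (phi Q (Suc j)) 1 * poly (chi Q (n - j)) 1))"
    by (simp add: lessThan_Suc_atMost)
  also have "\<dots> = (\<Sum>j<n. of_nat (n choose j) * (poly (phi Q (Suc j)) 1 * poly (chi Q (n - j)) 1))
      + poly (phi Q (Suc n)) 1"
    by (simp add: chi_def chiS_empty)
  also have "(\<Sum>j<n. of_nat (n choose j) * (poly (phi Q (Suc j)) 1 * poly (chi Q (n - j)) 1)) = 0"
    by (rule sum.neutral) (auto simp: z)
  finally show ?thesis by simp
qed

lemma phi_eq:
  assumes "\<forall>r\<in>Q. r \<noteq> 0" "finite Q" "k \<ge> 1"
  shows "phi Q k = smult (of_int (beta Q k)) [:-1, 1:]"
proof -
  obtain n where k: "k = Suc n" using assms(3) by (cases k) auto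
  have "poly (phi Q k) 1 = 0" using phi_at1[OF assms(1,2)] k by simp
  then have "of_int (gamma Q k) + of_int (beta Q k) = (0::rat)"
    using phi_split[OF assms] by simp
  then have "of_int (gamma Q k) = - (of_int (beta Q k) :: rat)" by linarith
  then show ?thesis using phi_split[OF assms] by simp
qed

lemma fps_ode_unique:
  fixes X Y H :: "rat poly fps"
  assumes "fps_deriv X = H * X" "fps_deriv Y = H * Y" "fps_nth X 0 = fps_nth Y 0"
  shows "X = Y"
proof -
  have "fps_nth X n = fps_nth Y n" for n
  proof (induction n rule: less_induct)
    case (less n)
    show ?case
    proof (cases n)
      case 0 then show ?thesis using assms(3) by simp
    next
      case (Suc m)
      have "of_nat (Suc m) * fps_nth X (Suc m) = fps_nth (fps_deriv X) m" by simp
      also have "\<dots> = (\<Sum>i=0..m. fps_nth H i * fps_nth X (m - i))" using assms(1) fps_mult_nth by metis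
      also have "\<dots> = (\<Sum>i=0..m. fps_nth H i * fps_nth Y (m - i))"
        by (rule sum.cong[OF refl]) (simp add: less.IH Suc)
      also have "\<dots> = fps_nth (fps_deriv Y) m" using assms(2) fps_mult_nth by metis
      also have "\<dots> = of_nat (Suc m) * fps_nth Y (Suc m)" by simp
      finally have "of_nat (Suc m) * fps_nth X (Suc m) = of_nat (Suc m) * fps_nth Y (Suc m)" .
      moreover have "(of_nat (Suc m) :: rat poly) \<noteq> 0" by (rule of_nat_neq_0)
      ultimately show ?thesis using Suc by simp
    qed
  qed
  then show ?thesis by (simp add: fps_eq_iff)
qed

definition expA :: "rat poly fps" where "expA = Abs_fps (\<lambda>k. [:inverse (fact k):])"

lemma of_nat_rpoly: "(of_nat m :: rat poly) = [:of_nat m:]"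
  by (induction m) (auto simp: one_pCons)

lemma smult_sum_right: "smult c (sum f A) = (\<Sum>x\<in>A. smult c (f x))"
  by (induction A rule: infinite_finite_induct) (auto simp: smult_add_right)

lemma fact_inv_Suc: "of_nat (Suc n) * inverse (fact (Suc n) :: rat) = inverse (fact n)"
proof -
  have "(of_nat (Suc n)::rat) \<noteq> 0" by (rule of_nat_neq_0)
  then show ?thesis unfolding fact_Suc inverse_mult_distrib by (simp add: mult.assoc[symmetric] del: of_nat_Suc)
qed

lemma deriv_expA: "fps_deriv expA = expA"
proof (rule fps_ext)
  fix n
  have "fps_nth (fps_deriv expA) n = [:of_nat (Suc n) * inverse (fact (Suc n)):]"
    by (simp add: expA_def of_nat_rpoly)
  also have "of_nat (Suc n) * inverse (fact (Suc n) :: rat) = inverse (fact n)"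
    by (rule fact_inv_Suc)
  finally show "fps_nth (fps_deriv expA) n = fps_nth expA n" by (simp add: expA_def)
qed

lemma egf_exp:
  fixes chi phi :: "nat \<Rightarrow> rat poly"
  assumes c0: "chi 0 = 1"
    and rec: "\<And>n. chi (Suc n) = (\<Sum>j\<le>n. of_nat (n choose j) * (phi (Suc j) * chi (n - j)))"
  shows "Abs_fps (\<lambda>n. smult (inverse (fact n)) (chi n))
       = fps_compose expA (Abs_fps (\<lambda>n. if n = 0 then 0 else smult (inverse (fact n)) (phi n)))"
    (is "?F = expA oo ?G")
proof (rule fps_ode_unique)
  have G0: "fps_nth ?G 0 = 0" by simp
  show "fps_deriv (expA oo ?G) = fps_deriv ?G * (expA oo ?G)"
    using fps_compose_deriv[OF G0, of expA] deriv_expA by (simp add: mult.commute)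
  show "fps_nth ?F 0 = fps_nth (expA oo ?G) 0" using c0 by (simp add: expA_def)
  show "fps_deriv ?F = fps_deriv ?G * ?F"
  proof (rule fps_ext)
    fix n
    have "fps_nth (fps_deriv ?F) n = smult (of_nat (Suc n) * inverse (fact (Suc n))) (chi (Suc n))"
      by (simp add: of_nat_rpoly mult_ac)
    also have "\<dots> = smult (inverse (fact n)) (chi (Suc n))"
      by (simp only: fact_inv_Suc)
    also have "\<dots> = (\<Sum>j=0..n. smult (inverse (fact n) * of_nat (n choose j)) (phi (Suc j) * chi (n - j)))"
      unfolding rec smult_sum_right atMost_atLeast0
      by (rule sum.cong[OF refl]) (simp add: of_nat_rpoly smult_smult)
    also have "\<dots> = (\<Sum>j=0..n. fps_nth (fps_deriv ?G) j * fps_nth ?F (n - j))"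
    proof (rule sum.cong[OF refl])
      fix j assume j: "j \<in> {0..n}"
      have "inverse (fact n) * of_nat (n choose j) = (inverse (fact j) * inverse (fact (n - j)) :: rat)"
        using j binomial_fact[of j n, where 'a = rat] by (simp add: field_simps)
      moreover have "of_nat (Suc j) * inverse (fact (Suc j)) = (inverse (fact j) :: rat)"
        by (rule fact_inv_Suc)
      ultimately show "smult (inverse (fact n) * of_nat (n choose j)) (phi (Suc j) * chi (n - j))
          = fps_nth (fps_deriv ?G) j * fps_nth ?F (n - j)"
        by (simp add: of_nat_rpoly mult_smult_left mult_smult_right smult_smult mult_ac del: fact_Suc of_nat_Suc)
    qed
    also have "\<dots> = fps_nth (fps_deriv ?G * ?F) n" by (simp add: fps_mult_nth)
    finally show "fps_nth (fps_deriv ?F) n = fps_nth (fps_deriv ?G * ?F) n" .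
  qed
qed

definition QS :: "rat set \<Rightarrow> rat set" where "QS a = insert 1 (a \<union> inverse ` a)"

lemma QS_pos: "\<forall>r\<in>a. r > 0 \<Longrightarrow> \<forall>r\<in>QS a. r > 0"
  unfolding QS_def by auto

lemma QS_finite: "finite a \<Longrightarrow> finite (QS a)"
  unfolding QS_def by simp

lemma dotn_unitv: "k < n \<Longrightarrow> dotn n c (unitv k) = c k"
  unfolding dotn_def unitv_def by (simp add: if_distrib cong: if_cong)

lemma dotn_add: "dotn n c (y + z) = dotn n c y + dotn n c z"
  unfolding dotn_def by (simp add: sum.distrib algebra_simps)

lemma dotn_scale: "dotn n c (vscale r y) = r * dotn n c y"
  unfolding dotn_def vscale_def by (simp add: sum_distrib_left algebra_simps)

lemma dotn_zero: "dotn n c 0 = 0"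
  unfolding dotn_def by simp

lemma Rn_unitv: "k < n \<Longrightarrow> unitv k \<in> Rn n"
  unfolding Rn_def unitv_def by auto

lemma Rn_zero: "0 \<in> Rn n" unfolding Rn_def by simp

lemma Rn_add: "y \<in> Rn n \<Longrightarrow> z \<in> Rn n \<Longrightarrow> y + z \<in> Rn n" unfolding Rn_def by simp

lemma Rn_scale: "y \<in> Rn n \<Longrightarrow> vscale r y \<in> Rn n" unfolding Rn_def vscale_def by simp

lemma hyp_mem: "y \<in> hyp n c d \<longleftrightarrow> y \<in> Rn n \<and> dotn n c y = d"
  unfolding hyp_def by simp

lemma nv_Rn: "x \<in> LD Q {..<n} \<Longrightarrow> nv x \<in> Rn n"
  using nv_supp[of x Q "{..<n}"] unfolding supp_in_def Rn_def by auto

lemma hyp_prop: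
  assumes x: "x \<in> LD Q {..<n}" and c: "c \<in> Rn n" and e: "hyp n c d = hyp n (nv x) 0"
  shows "d = 0 \<and> (\<exists>l. c = vscale l (nv x))"
proof -
  have mem: "y \<in> Rn n \<Longrightarrow> dotn n (nv x) y = 0 \<Longrightarrow> dotn n c y = d" for y
    using e hyp_mem by blast
  have d0: "d = 0" using mem[OF Rn_zero] dotn_zero by metis
  have cz: "c k = 0" if "k \<ge> n" for k using c that unfolding Rn_def by blast
  show ?thesis
  proof (cases x)
    case (Inl i)
    then have i: "i < n" using x by simp
    have "c k = 0" if "k < n" "k \<noteq> i" for k
    proof -
      have "dotn n (nv x) (unitv k) = 0" using that Inl by (simp add: dotn_unitv, simp add: unitv_def)
      then show ?thesis using mem[OF Rn_unitv[OF that(1)]] d0 dotn_unitv[OF that(1)] by simp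
    qed
    then have "c = vscale (c i) (nv x)" using Inl cz
      by (auto simp: fun_eq_iff vscale_def unitv_def) (metis not_le)
    then show ?thesis using d0 by blast
  next
    case (Inr p)
    then obtain i j r where p: "x = Inr (i,j,r)" by (cases p) auto
    then have ij: "i < n" "j < n" "i < j" using x by auto
    have "c k = 0" if "k < n" "k \<noteq> i" "k \<noteq> j" for k
    proof -
      have "dotn n (nv x) (unitv k) = 0" using that p
        by (simp add: dotn_add dotn_scale dotn_unitv del: nv_Inr add: nv.simps(2), simp add: unitv_def)
      then show ?thesis using mem[OF Rn_unitv[OF that(1)]] d0 dotn_unitv[OF that(1)] by simp
    qed
    moreover have "c j = - real_of_rat r * c i"
    proof -
      let ?w = "vscale (real_of_rat r) (unitv i) + unitv j"
      have w: "?w \<in> Rn n" using ij by (intro Rn_add Rn_scale Rn_unitv)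
      have "dotn n (nv x) ?w = 0" using ij p
        by (simp add: dotn_add dotn_scale dotn_unitv del: nv_Inr add: nv.simps(2), simp add: unitv_def)
      then have "dotn n c ?w = 0" using mem[OF w] d0 by simp
      then show ?thesis using ij by (simp add: dotn_add dotn_scale dotn_unitv)
    qed
    ultimately have "c = vscale (c i) (nv x)" using p cz ij
      by (auto simp: fun_eq_iff vscale_def unitv_def) (metis not_le)
    then show ?thesis using d0 by blast
  qed
qed

lemma nv_nonzero: "x \<in> LD Q S \<Longrightarrow> nv x \<noteq> 0"
proof (cases x)
  case (Inl i) then show ?thesis by (auto simp: fun_eq_iff unitv_def)
next
  case (Inr p)
  assume "x \<in> LD Q S"
  obtain i j r where xe: "x = Inr (i,j,r)" using Inr by (cases p) auto
  with \<open>x \<in> LD Q S\<close> have "i < j" by auto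
  then have "nv x i = 1" using xe by (simp add: vscale_def unitv_def)
  then show ?thesis by (metis zero_fun_apply zero_neq_one)
qed

lemma nv_prop_eq:
  assumes Q: "\<forall>r\<in>Q. r \<noteq> 0" and x: "x \<in> LD Q S" and y: "y \<in> LD Q S"
    and e: "nv y = vscale l (nv x)"
  shows "x = y"
proof -
  have at: "nv y m = l * nv x m" for m using e by (simp add: vscale_def)
  show ?thesis
  proof (cases x)
    case (Inl i) note xi = this
    show ?thesis
    proof (cases y)
      case (Inl i')
      then show ?thesis using at[of i'] xi by (auto simp: unitv_def split: if_splits)
    next
      case (Inr q) then obtain i' j' r' where ye: "y = Inr (i',j',r')" by (cases q) auto
      then have "i' < j'" "r' \<in> Q" using y by auto
      then have "r' \<noteq> 0" using Q by auto
      then show ?thesis using at[of i'] at[of j'] xi ye \<open>i' < j'\<close>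
        by (auto simp: unitv_def vscale_def split: if_splits)
    qed
  next
    case (Inr p) then obtain i j r where xe: "x = Inr (i,j,r)" by (cases p) auto
    then have ij: "i < j" "r \<in> Q" using x by auto
    then have r0: "r \<noteq> 0" using Q by auto
    show ?thesis
    proof (cases y)
      case (Inl i')
      then show ?thesis using at[of i'] at[of i] at[of j] xe ij r0
        by (auto simp: unitv_def vscale_def split: if_splits)
    next
      case (Inr q) then obtain i' j' r' where ye: "y = Inr (i',j',r')" by (cases q) auto
      then have "i' < j'" "r' \<in> Q" using y by auto
      then have r0': "r' \<noteq> 0" using Q by auto
      have l0: "l \<noteq> 0" using at[of i'] ye \<open>i' < j'\<close> by (auto simp: unitv_def vscale_def)
      have "i' = i"
        using at[of i'] at[of i] at[of j] ye xe ij r0 r0' l0 \<open>i' < j'\<close>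
        by (auto simp: unitv_def vscale_def split: if_splits)
      moreover have "j' = j"
        using at[of j'] at[of i] at[of j] ye xe ij r0 r0' l0 \<open>i' < j'\<close> \<open>i' = i\<close>
        by (auto simp: unitv_def vscale_def split: if_splits)
      moreover have "l = 1" using at[of i] ye xe ij \<open>i' = i\<close> \<open>j' = j\<close>
        by (auto simp: unitv_def vscale_def)
      moreover have "r' = r" using at[of j] ye xe ij \<open>i' = i\<close> \<open>j' = j\<close> \<open>l = 1\<close>
        by (auto simp: unitv_def vscale_def)
      ultimately show ?thesis using xe ye by simp
    qed
  qed
qed

definition Hh :: "nat \<Rightarrow> lab \<Rightarrow> (nat \<Rightarrow> real) set" where "Hh n x = hyp n (nv x) 0"

lemma Hh_inj: "\<forall>r\<in>Q. r \<noteq> 0 \<Longrightarrow> inj_on (Hh n) (LD Q {..<n})"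
proof (rule inj_onI)
  fix x y assume Q: "\<forall>r\<in>Q. r \<noteq> 0" and x: "x \<in> LD Q {..<n}" and y: "y \<in> LD Q {..<n}"
    and e: "Hh n x = Hh n y"
  obtain l where "nv y = vscale l (nv x)" using hyp_prop[OF x nv_Rn[OF y]] e unfolding Hh_def by metis
  then show "x = y" using nv_prop_eq[OF Q x y] by blast
qed

lemma dotn_scale_left: "dotn n (vscale l c) y = l * dotn n c y"
  unfolding dotn_def vscale_def by (simp add: sum_distrib_left algebra_simps)

lemma hyp_scale: "l \<noteq> 0 \<Longrightarrow> hyp n (vscale l c) 0 = hyp n c 0"
  unfolding hyp_def dotn_scale_left by simp

lemma hyp_cong: "c = c' \<Longrightarrow> hyp n c d = hyp n c' d" by simp

lemma arrA_eq:
  assumes pos: "\<forall>r\<in>a. r > 0"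
  shows "arrA n a = Hh n ` LD (QS a) {..<n}"
proof
  show "arrA n a \<subseteq> Hh n ` LD (QS a) {..<n}"
  proof
    fix h assume "h \<in> arrA n a"
    then consider (A) i where "h = hyp n (unitv i) 0" "i < n"
      | (B) i j where "h = hyp n (\<lambda>k. unitv i k - unitv j k) 0" "i < j" "j < n"
      | (C) i j r where "h = hyp n (\<lambda>k. unitv i k - real_of_rat r * unitv j k) 0" "i < n" "j < n" "i \<noteq> j" "r \<in> a"
      unfolding arrA_def by blast
    then show "h \<in> Hh n ` LD (QS a) {..<n}"
    proof cases
      case A
      then have "h = Hh n (Inl i)" "Inl i \<in> LD (QS a) {..<n}" by (auto simp: Hh_def)
      then show ?thesis by blast
    next
      case B
      then have "h = Hh n (Inr (i,j,1))" by (simp add: Hh_def vscale_def fun_diff_def)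
      moreover have "Inr (i,j,1) \<in> LD (QS a) {..<n}" using B by (simp add: QS_def)
      ultimately show ?thesis by blast
    next
      case C
      show ?thesis
      proof (cases "i < j")
        case True
        then have "h = Hh n (Inr (i,j,r))" using C by (simp add: Hh_def vscale_def fun_diff_def)
        moreover have "Inr (i,j,r) \<in> LD (QS a) {..<n}" using C True by (simp add: QS_def)
        ultimately show ?thesis by blast
      next
        case False
        then have ji: "j < i" using C by simp
        have r0: "real_of_rat r \<noteq> 0" using pos C by auto
        have "nv (Inr (j,i,inverse r)) = vscale (- inverse (real_of_rat r)) (\<lambda>k. unitv i k - real_of_rat r * unitv j k)"
          using r0 by (simp add: fun_eq_iff vscale_def of_rat_inverse of_rat_divide field_simps)
        then have "h = Hh n (Inr (j,i,inverse r))" using C r0 hyp_scale[of "- inverse (real_of_rat r)" n]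
          by (simp add: Hh_def)
        moreover have "Inr (j,i,inverse r) \<in> LD (QS a) {..<n}" using C ji by (simp add: QS_def)
        ultimately show ?thesis by blast
      qed
    qed
  qed
  show "Hh n ` LD (QS a) {..<n} \<subseteq> arrA n a"
  proof
    fix h assume "h \<in> Hh n ` LD (QS a) {..<n}"
    then obtain x where x: "x \<in> LD (QS a) {..<n}" "h = Hh n x" by blast
    show "h \<in> arrA n a"
    proof (cases x)
      case (Inl i) then show ?thesis using x unfolding arrA_def Hh_def by auto
    next
      case (Inr p) then obtain i j r where xe: "x = Inr (i,j,r)" by (cases p) auto
      then have ij: "i < n" "j < n" "i < j" "r \<in> QS a" using x by auto
      then consider "r = 1" | "r \<in> a" | s where "r = inverse s" "s \<in> a" unfolding QS_def by blast
      then show ?thesis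
      proof cases
        case 1
        then have "h = hyp n (\<lambda>k. unitv i k - unitv j k) 0" using x xe by (simp add: Hh_def vscale_def fun_diff_def)
        then show ?thesis using ij unfolding arrA_def by blast
      next
        case 2
        then have "h = hyp n (\<lambda>k. unitv i k - real_of_rat r * unitv j k) 0" using x xe
          by (simp add: Hh_def vscale_def fun_diff_def)
        then show ?thesis using ij 2 unfolding arrA_def by blast
      next
        case 3
        have s0: "real_of_rat s \<noteq> 0" using pos 3 by auto
        have "nv x = vscale (- inverse (real_of_rat s)) (\<lambda>k. unitv j k - real_of_rat s * unitv i k)"
          using s0 xe 3 by (simp add: fun_eq_iff vscale_def of_rat_inverse of_rat_divide field_simps)
        then have "h = hyp n (\<lambda>k. unitv j k - real_of_rat s * unitv i k) 0"
          using x s0 hyp_scale[of "- inverse (real_of_rat s)" n] by (simp add: Hh_def)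
        moreover have "j \<noteq> i" using ij by simp
        ultimately show ?thesis using ij 3 unfolding arrA_def by blast
      qed
    qed
  qed
qed

lemma arr_rank_Hh:
  assumes "K \<subseteq> LD Q {..<n}"
  shows "arr_rank n (Hh n ` K) = rk K"
proof -
  have "normals n (Hh n ` K) \<subseteq> V.span (nv ` K)"
  proof
    fix c assume "c \<in> normals n (Hh n ` K)"
    then obtain d x where c: "c \<in> Rn n" "x \<in> K" "hyp n c d = Hh n x" unfolding normals_def by blast
    have xL: "x \<in> LD Q {..<n}" using c(2) assms by blast
    obtain l where cl: "c = vscale l (nv x)" using hyp_prop[OF xL c(1)] c(3) unfolding Hh_def by blast
    have "nv x \<in> V.span (nv ` K)" using c(2) by (intro V.span_base imageI)
    then show "c \<in> V.span (nv ` K)" unfolding cl by (rule V.span_scale)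
  qed
  moreover have "nv ` K \<subseteq> V.span (normals n (Hh n ` K))"
  proof
    fix c assume "c \<in> nv ` K"
    then obtain x where x: "x \<in> K" "c = nv x" by blast
    have xL: "x \<in> LD Q {..<n}" using x(1) assms by blast
    have "c \<in> Rn n" "c \<noteq> 0" using nv_Rn[OF xL] nv_nonzero[OF xL] x(2) by auto
    moreover have "hyp n c 0 \<in> Hh n ` K" using x by (simp add: Hh_def)
    ultimately have "c \<in> normals n (Hh n ` K)" unfolding normals_def by blast
    then show "c \<in> V.span (normals n (Hh n ` K))" by (rule V.span_base)
  qed
  ultimately have "V.span (normals n (Hh n ` K)) = V.span (nv ` K)"
    using V.span_eq[of "normals n (Hh n ` K)" "nv ` K"] by blast
  then show ?thesis unfolding arr_rank_def rk_def by (rule V.span_eq_dim)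
qed

lemma char_poly_chiS:
  assumes fin: "finite a" and pos: "\<forall>r\<in>a. r > 0"
  shows "char_poly n (arrA n a) = chiS (QS a) {..<n}"
proof -
  let ?L = "LD (QS a) {..<n}"
  have Q0: "\<forall>r\<in>QS a. r \<noteq> 0" using QS_pos[OF pos] by auto
  have A: "arrA n a = Hh n ` ?L" by (rule arrA_eq[OF pos])
  have set: "{B. B \<subseteq> arrA n a \<and> Rn n \<inter> \<Inter>B \<noteq> {}} = Pow (Hh n ` ?L)"
  proof -
    have "0 \<in> Rn n \<inter> \<Inter>B" if "B \<subseteq> Hh n ` ?L" for B
      using that Rn_zero by (auto simp: Hh_def hyp_mem dotn_def)
    then show ?thesis unfolding A by blast
  qed
  have "char_poly n (arrA n a) = (\<Sum>B\<in>image (Hh n) ` Pow ?L. (-1) ^ card B * monom 1 (n - arr_rank n B))"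
    unfolding char_poly_def set image_Pow_surj[OF refl] ..
  also have "\<dots> = (\<Sum>K\<in>Pow ?L. (-1) ^ card (Hh n ` K) * monom 1 (n - arr_rank n (Hh n ` K)))"
    by (simp add: sum.reindex[OF inj_on_image_Pow[OF Hh_inj[OF Q0]]] o_def)
  also have "\<dots> = chiS (QS a) {..<n}"
    unfolding chiS_def wt_def
  proof (rule sum.cong[OF refl])
    fix K assume K: "K \<in> Pow ?L"
    have "card (Hh n ` K) = card K" using card_image inj_on_subset[OF Hh_inj[OF Q0]] K by blast
    then show "(-1) ^ card (Hh n ` K) * monom 1 (n - arr_rank n (Hh n ` K)) = (-1) ^ card K * monom 1 (card {..<n} - rk K)"
      using arr_rank_Hh K by simp
  qed
  finally show ?thesis .
qed

lemma egf_Q: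
  assumes fin: "finite Q" and Q0: "\<forall>r\<in>Q. r \<noteq> 0"
  shows "Abs_fps (\<lambda>n. smult (inverse (fact n)) (chi Q n)) = fps_exp_of (b_series (beta Q))"
proof -
  have "Abs_fps (\<lambda>n. smult (inverse (fact n)) (chi Q n))
       = fps_compose expA (Abs_fps (\<lambda>n. if n = 0 then 0 else smult (inverse (fact n)) (phi Q n)))"
  proof (rule egf_exp)
    show "chi Q 0 = 1" unfolding chi_def using chiS_empty by simp
    show "\<And>n. chi Q (Suc n) = (\<Sum>j\<le>n. of_nat (n choose j) * (phi Q (Suc j) * chi Q (n - j)))"
      by (rule chi_REC[OF fin])
  qed
  also have "Abs_fps (\<lambda>n. if n = 0 then 0 else smult (inverse (fact n)) (phi Q n)) = b_series (beta Q)"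
    unfolding b_series_def
  proof (rule arg_cong[where f = Abs_fps], rule ext)
    fix n show "(if n = 0 then 0 else smult (inverse (fact n)) (phi Q n))
       = (if n = 0 then 0 else smult (of_int (beta Q n) / fact n) [:-1, 1:])"
      using phi_eq[OF Q0 fin, of n] by (simp add: smult_smult field_simps)
  qed
  finally show ?thesis unfolding fps_exp_of_def expA_def .
qed

lemma part1:
  assumes fin: "finite a" and pos: "\<forall>r\<in>a. r > 0"
  shows "char_egf a = fps_exp_of (b_series (beta (QS a)))"
proof -
  have Q0: "\<forall>r\<in>QS a. r \<noteq> 0" using QS_pos[OF pos] by auto
  have "char_egf a = Abs_fps (\<lambda>n. smult (inverse (fact n)) (chi (QS a) n))"
    unfolding char_egf_def chi_def using char_poly_chiS[OF fin pos] by simp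
  then show ?thesis using egf_Q[OF QS_finite[OF fin] Q0] by simp
qed

definition mo :: "rat set \<Rightarrow> (rat \<Rightarrow> rat) \<Rightarrow> (rat \<Rightarrow> int) \<Rightarrow> rat" where
  "mo A f e = (\<Prod>s\<in>A. f s powi e s)"

definition eps :: "rat set \<Rightarrow> rat \<Rightarrow> rat \<Rightarrow> int" where
  "eps A r = (if r \<in> A then (\<lambda>s. if s = r then 1 else 0)
     else if inverse r \<in> A then (\<lambda>s. if s = inverse r then -1 else 0) else (\<lambda>s. 0))"

lemma mo_add: "\<forall>s\<in>A. f s \<noteq> 0 \<Longrightarrow> mo A f (\<lambda>s. e s + e' s) = mo A f e * mo A f e'"
  unfolding mo_def by (simp add: power_int_add prod.distrib)

lemma mo_pos: "\<forall>s\<in>A. f s > 0 \<Longrightarrow> mo A f e > 0"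
  unfolding mo_def by (intro prod_pos) simp

lemma mo_cong: "\<forall>s\<in>A. e s = e' s \<Longrightarrow> mo A f e = mo A f e'"
  unfolding mo_def by (rule prod.cong) auto

lemma mo_zero: "mo A f (\<lambda>s. 0) = 1" unfolding mo_def by simp

lemma mo_delta: "finite A \<Longrightarrow> r \<in> A \<Longrightarrow> mo A f (\<lambda>s. if s = r then c else 0) = f r powi c"
  unfolding mo_def by (simp add: if_distrib prod.delta cong: if_cong)

lemma mo_eps:
  assumes "finite A"
  shows "mo A f (eps A r) = (if r \<in> A then f r else if inverse r \<in> A then inverse (f (inverse r)) else 1)"
  unfolding eps_def using mo_delta[OF assms] mo_zero by (auto simp: power_int_minus)

lemma mo_diff:
  assumes "\<forall>s\<in>A. f s \<noteq> 0"
  shows "mo A f (\<lambda>s. e s - d s) = mo A f e / mo A f d"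
proof -
  have nz: "mo A f d \<noteq> 0" using assms unfolding mo_def
    by (metis (mono_tags, lifting) power_int_not_zero prod_zero_iff prod.infinite zero_neq_one)
  have "mo A f (\<lambda>s. e s - d s) * mo A f d = mo A f e"
    using mo_add[OF assms, of "\<lambda>s. e s - d s" d] by simp
  then show ?thesis using nz by (simp add: field_simps)
qed

locale indep =
  fixes a :: "rat set"
  assumes fin: "finite a" and pos: "\<forall>r\<in>a. r > 0" and ind: "mult_indep a"
begin

lemma ind_uniq: "mo a id e = mo a id e' \<Longrightarrow> \<forall>s\<in>a. e s = e' s"
proof -
  assume h: "mo a id e = mo a id e'"
  have nz: "\<forall>s\<in>a. id s \<noteq> 0" using pos by auto
  have q: "mo a id (\<lambda>s. e s - e' s) = mo a id e / mo a id e'" by (rule mo_diff[OF nz])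
  have "mo a id e' > 0" using mo_pos[of a id e'] pos by simp
  then have "mo a id (\<lambda>s. e s - e' s) = 1" unfolding q h by simp
  then have "\<forall>s\<in>a. (\<lambda>s. e s - e' s) s = 0"
    using ind[unfolded mult_indep_def, rule_format, of "\<lambda>s. e s - e' s"] unfolding mo_def by simp
  then show ?thesis by simp
qed

lemma one_notin: "1 \<notin> a"
proof
  assume h: "1 \<in> a"
  have "mo a id (\<lambda>s. if s = 1 then 1 else 0) = 1" using mo_delta[OF fin h] by simp
  then have "\<forall>s\<in>a. (\<lambda>s. if s = 1 then 1 else 0 :: int) s = 0"
    using ind[unfolded mult_indep_def, rule_format, of "\<lambda>s. if s = 1 then 1 else 0"] unfolding mo_def by simp
  then show False using h by auto
qed

lemma inv_notin: "r \<in> a \<Longrightarrow> inverse r \<notin> a"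
proof
  assume r: "r \<in> a" and ir: "inverse r \<in> a"
  have rne: "r \<noteq> inverse r"
  proof
    assume "r = inverse r"
    moreover have "r \<noteq> 0" using pos r by auto
    ultimately have "r * r = 1" by (metis right_inverse)
    then have "(r - 1) * (r + 1) = 0" by (simp add: algebra_simps)
    moreover have "r + 1 \<noteq> 0" using pos r by (metis add_pos_pos less_irrefl zero_less_one)
    ultimately have "r = 1" by simp
    then show False using one_notin r by simp
  qed
  let ?e = "\<lambda>s. (if s = r then 1 else 0) + (if s = inverse r then 1 else (0::int))"
  have "mo a id ?e = mo a id (\<lambda>s. if s = r then 1 else 0) * mo a id (\<lambda>s. if s = inverse r then 1 else 0)"
  proof (rule mo_add)
    show "\<forall>s\<in>a. id s \<noteq> 0" using pos by auto
  qed
  also have "\<dots> = r * inverse r" using mo_delta[OF fin r] mo_delta[OF fin ir] by simp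
  also have "\<dots> = 1" using pos r by (metis less_irrefl right_inverse)
  finally have "\<forall>s\<in>a. ?e s = 0"
    using ind[unfolded mult_indep_def, rule_format, of ?e] unfolding mo_def by simp
  then have "?e r = 0" using r by blast
  then show False using rne by simp
qed

lemma mo_eps_id: "r \<in> QS a \<Longrightarrow> mo a id (eps a r) = r"
  unfolding mo_eps[OF fin] QS_def using one_notin by auto

end

definition psi :: "rat set \<Rightarrow> (rat \<Rightarrow> rat) \<Rightarrow> rat \<Rightarrow> rat" where
  "psi a \<sigma> r = mo a \<sigma> (eps a r)"

fun Phi :: "rat set \<Rightarrow> (rat \<Rightarrow> rat) \<Rightarrow> lab \<Rightarrow> lab" where
  "Phi a \<sigma> (Inl i) = Inl i"
| "Phi a \<sigma> (Inr (i,j,r)) = Inr (i,j,psi a \<sigma> r)"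

lemma sum_unitv_mult: "finite S \<Longrightarrow> i \<in> S \<Longrightarrow> (\<Sum>m\<in>S. unitv i m * c m) = c i"
proof -
  assume "finite S" "i \<in> S"
  have "(\<Sum>m\<in>S. unitv i m * c m) = (\<Sum>m\<in>S. if m = i then c m else 0)"
    by (rule sum.cong) (auto simp: unitv_def)
  then show ?thesis using \<open>finite S\<close> \<open>i \<in> S\<close> by simp
qed

locale tr = A: indep a + B: indep a' for a a' +
  fixes \<sigma> :: "rat \<Rightarrow> rat"
  assumes bij: "bij_betw \<sigma> a a'"
begin

lemma \<sigma>_pos: "s \<in> a \<Longrightarrow> \<sigma> s > 0" using bij B.pos bij_betwE by blast

lemma \<sigma>_nz: "\<forall>s\<in>a. \<sigma> s \<noteq> 0" using \<sigma>_pos by (metis less_irrefl)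

lemma id_nz: "\<forall>s\<in>a. id s \<noteq> 0" using A.pos by (metis id_apply less_irrefl)

lemma transfer:
  assumes fS: "finite S" and KS: "K \<subseteq> LD (QS a) S" and vS: "v \<in> S" and cK: "conn K v S"
    and hv: "unitv v \<notin> V.span (nv ` K)"
  shows "unitv v \<notin> V.span (nv ` Phi a \<sigma> ` K)"
proof -
  let ?W = "V.span (nv ` K)"
  define P where "P i e \<longleftrightarrow> unitv i - vscale (real_of_rat (mo a id e)) (unitv v) \<in> ?W" for i e
  have rQ: "r \<in> QS a" if "Inr (y,z,r) \<in> K" for y z r using that KS by auto
  have rpos: "r > 0" if "Inr (y,z,r) \<in> K" for y z r using rQ[OF that] QS_pos[OF A.pos] by blast
  have reps: "mo a id (eps a r) = r" if "Inr (y,z,r) \<in> K" for y z r using A.mo_eps_id rQ[OF that] by blast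
  have inW: "nv x \<in> ?W" if "x \<in> K" for x using that by (intro V.span_base imageI)
  have stepA: "P z (\<lambda>s. e s - eps a r s)" if "P y e" "Inr (y,z,r) \<in> K" for y z r e
  proof -
    have r0: "real_of_rat r \<noteq> 0" using rpos[OF that(2)] by simp
    have m0: "mo a id (\<lambda>s. e s - eps a r s) = mo a id e / mo a id (eps a r)" by (rule mo_diff[OF id_nz])
    have m: "mo a id (\<lambda>s. e s - eps a r s) = mo a id e / r" using m0 reps[OF that(2)] by simp
    have "vscale (inverse (real_of_rat r)) ((unitv y - vscale (real_of_rat (mo a id e)) (unitv v)) - nv (Inr (y,z,r))) \<in> ?W"
      using that(1) inW[OF that(2)] unfolding P_def by (rule V.span_scale[OF V.span_diff])
    moreover have "vscale (inverse (real_of_rat r)) ((unitv y - vscale (real_of_rat (mo a id e)) (unitv v)) - nv (Inr (y,z,r)))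
        = unitv z - vscale (real_of_rat (mo a id (\<lambda>s. e s - eps a r s))) (unitv v)"
      unfolding m nv_Inr using r0 by (simp add: fun_eq_iff vscale_def of_rat_divide field_simps)
    ultimately show ?thesis unfolding P_def by (metis (no_types))
  qed
  have stepB: "P z (\<lambda>s. e s + eps a r s)" if "P y e" "Inr (z,y,r) \<in> K" for y z r e
  proof -
    have m0: "mo a id (\<lambda>s. e s + eps a r s) = mo a id e * mo a id (eps a r)" by (rule mo_add[OF id_nz])
    have m: "mo a id (\<lambda>s. e s + eps a r s) = mo a id e * r" using m0 reps[OF that(2)] by simp
    have "nv (Inr (z,y,r)) + vscale (real_of_rat r) (unitv y - vscale (real_of_rat (mo a id e)) (unitv v)) \<in> ?W"
      using inW[OF that(2)] that(1) unfolding P_def by (rule V.span_add[OF _ V.span_scale])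
    moreover have "nv (Inr (z,y,r)) + vscale (real_of_rat r) (unitv y - vscale (real_of_rat (mo a id e)) (unitv v))
        = unitv z - vscale (real_of_rat (mo a id (\<lambda>s. e s + eps a r s))) (unitv v)"
      unfolding m nv_Inr by (simp add: fun_eq_iff vscale_def of_rat_mult field_simps)
    ultimately show ?thesis unfolding P_def by (metis (no_types))
  qed
  have prp: "\<exists>e. P i e" if "(adjL K)\<^sup>*\<^sup>* v i" for i
    using that
  proof (induction rule: rtranclp_induct)
    case base
    have "unitv v - vscale (real_of_rat (mo a id (\<lambda>s. 0))) (unitv v) = 0"
      by (simp add: mo_zero fun_eq_iff vscale_def)
    then have "P v (\<lambda>s. 0)" unfolding P_def by (simp add: V.span_zero)
    then show ?case by blast
  next
    case (step y z)
    then obtain e where e: "P y e" by blast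
    from step.hyps(2) obtain r where "Inr (y,z,r) \<in> K \<or> Inr (z,y,r) \<in> K" unfolding adjL_def by blast
    then show ?case using stepA[OF e] stepB[OF e] by blast
  qed
  have uniq: "mo a id e1 = mo a id e2" if "P i e1" "P i e2" for i e1 e2
  proof (rule ccontr)
    assume ne: "mo a id e1 \<noteq> mo a id e2"
    let ?c = "real_of_rat (mo a id e2) - real_of_rat (mo a id e1)"
    have c0: "?c \<noteq> 0" using ne by simp
    have "(unitv i - vscale (real_of_rat (mo a id e1)) (unitv v)) - (unitv i - vscale (real_of_rat (mo a id e2)) (unitv v)) \<in> ?W"
      using that unfolding P_def by (rule V.span_diff)
    then have "vscale (inverse ?c) ((unitv i - vscale (real_of_rat (mo a id e1)) (unitv v)) - (unitv i - vscale (real_of_rat (mo a id e2)) (unitv v))) \<in> ?W"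
      by (rule V.span_scale)
    moreover have "vscale (inverse ?c) ((unitv i - vscale (real_of_rat (mo a id e1)) (unitv v)) - (unitv i - vscale (real_of_rat (mo a id e2)) (unitv v))) = unitv v"
      using c0 by (simp add: fun_eq_iff vscale_def field_simps)
    ultimately show False using hv by simp
  qed
  define E where "E i = (SOME e. P i e)" for i
  have PE: "P i (E i)" if "i \<in> S" for i
    using prp[of i] cK that unfolding conn_def E_def by (metis someI_ex)
  have edge: "\<forall>s\<in>a. E j s = E i s - eps a r s" if "Inr (i,j,r) \<in> K" for i j r
  proof -
    have ij: "i \<in> S" "j \<in> S" using that KS by auto
    have "mo a id (E j) = mo a id (\<lambda>s. E i s - eps a r s)"
      using uniq[OF PE[OF ij(2)] stepA[OF PE[OF ij(1)] that]] .
    then show ?thesis by (rule A.ind_uniq)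
  qed
  have noloop: "\<exists>i j r. x = Inr (i,j,r)" if "x \<in> K" for x
  proof (cases x)
    case (Inl i)
    then have iS: "i \<in> S" using that KS by auto
    have "unitv i \<in> ?W" using inW[OF that] Inl by simp
    then have "unitv i - (unitv i - vscale (real_of_rat (mo a id (E i))) (unitv v)) \<in> ?W"
      using PE[OF iS] unfolding P_def by (rule V.span_diff)
    then have "vscale (real_of_rat (mo a id (E i))) (unitv v) \<in> ?W" by simp
    then have "vscale (inverse (real_of_rat (mo a id (E i)))) (vscale (real_of_rat (mo a id (E i))) (unitv v)) \<in> ?W"
      by (rule V.span_scale)
    moreover have "mo a id (E i) > 0" using mo_pos[of a id] A.pos by simp
    then have "real_of_rat (mo a id (E i)) \<noteq> 0" by simp
    then have "vscale (inverse (real_of_rat (mo a id (E i)))) (vscale (real_of_rat (mo a id (E i))) (unitv v)) = unitv v"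
      by (simp add: vscale_def fun_eq_iff)
    ultimately have "unitv v \<in> ?W" by simp
    then show ?thesis using hv by simp
  next
    case (Inr p) then show ?thesis by (cases p) auto
  qed
  define p' where "p' m = real_of_rat (mo a \<sigma> (E m))" for m
  define L where "L y = (\<Sum>m\<in>S. y m * p' m)" for y :: "nat \<Rightarrow> real"
  have Lsub: "V.subspace {y. L y = 0}"
    unfolding V.subspace_def L_def by (auto simp: vscale_def sum.distrib algebra_simps sum_distrib_left[symmetric])
  have Lnv: "L (nv x) = 0" if xP: "x \<in> Phi a \<sigma> ` K" for x
  proof -
    obtain y where y: "y \<in> K" "x = Phi a \<sigma> y" using xP by blast
    obtain i j r where yy: "y = Inr (i,j,r)" using noloop[OF y(1)] by blast
    have ij: "i \<in> S" "j \<in> S" using y(1) yy KS by auto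
    have "mo a \<sigma> (E i) = mo a \<sigma> (\<lambda>s. (E i s - eps a r s) + eps a r s)" by simp
    also have "\<dots> = mo a \<sigma> (E j) * psi a \<sigma> r"
      unfolding psi_def mo_add[OF \<sigma>_nz] using edge[OF y(1)[unfolded yy]] by (simp add: mo_cong)
    finally have pe: "p' i = real_of_rat (psi a \<sigma> r) * p' j" unfolding p'_def by (simp add: of_rat_mult)
    have "L (nv x) = (\<Sum>m\<in>S. unitv i m * p' m) - real_of_rat (psi a \<sigma> r) * (\<Sum>m\<in>S. unitv j m * p' m)"
      unfolding L_def y(2) yy by (simp add: vscale_def sum_subtractf sum_distrib_left algebra_simps)
    also have "\<dots> = 0" using sum_unitv_mult[OF fS ij(1)] sum_unitv_mult[OF fS ij(2)] pe by simp
    finally show ?thesis .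
  qed
  have "V.span (nv ` Phi a \<sigma> ` K) \<subseteq> {y. L y = 0}"
    by (rule V.span_minimal[OF _ Lsub]) (auto intro: Lnv)
  moreover have "L (unitv v) \<noteq> 0"
  proof -
    have "L (unitv v) = p' v" unfolding L_def using sum_unitv_mult[OF fS vS] .
    moreover have "mo a \<sigma> (E v) > 0" using mo_pos[of a \<sigma>] \<sigma>_pos by blast
    ultimately show ?thesis unfolding p'_def by simp
  qed
  ultimately show ?thesis by blast
qed

end

lemma lab_cases: obtains i where "x = Inl i" | i j r where "x = Inr (i,j,r)"
proof (cases x)
  case (Inl i) then show ?thesis using that by blast
next
  case (Inr p) then show ?thesis using that by (cases p) auto
qed

lemma rk_char:
  assumes Q0: "\<forall>r\<in>Q. r \<noteq> 0" and fQ: "finite Q" and k1: "k \<ge> 1"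
    and K: "K \<subseteq> LD Q {..<k}" and cK: "conn K (k - 1) {..<k}"
  shows "rk K = k \<longleftrightarrow> unitv (k - 1) \<in> V.span (nv ` K)"
proof -
  let ?u = "unitv (k - 1)" and ?X = "nv ` K"
  have fX: "finite ?X" using finite_sub_LD[OF fQ _ K] by blast
  have "unitv ` {..<k} \<subseteq> V.span (insert ?u ?X)"
    using reach_span[OF Q0 K] cK unfolding conn_def by blast
  then have ge: "k \<le> V.dim (insert ?u ?X)"
    using fin_dim_mono[of "insert ?u ?X" "unitv ` {..<k}"] fX dim_unitv[of "{..<k}"] by simp
  have "?u \<in> V.span (unitv ` {..<k})" using k1 by (intro V.span_base) auto
  moreover have "?X \<subseteq> V.span (unitv ` {..<k})" using nv_in_span K by blast
  ultimately have "insert ?u ?X \<subseteq> V.span (unitv ` {..<k})" by blast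
  then have le: "V.dim (insert ?u ?X) \<le> k"
    using fin_dim_mono[of "unitv ` {..<k}" "insert ?u ?X"] dim_unitv[of "{..<k}"] by simp
  show ?thesis
  proof (cases "?u \<in> V.span ?X")
    case True
    then show ?thesis using dim_insert_in[OF True] ge le unfolding rk_def by simp
  next
    case False
    then show ?thesis using dim_insert_notin[OF fX False] ge le unfolding rk_def by simp
  qed
qed

lemma adjL_Phi: "adjL (Phi a \<sigma> ` K) = adjL K"
proof (intro ext)
  fix i j
  have *: "Inr (i,j,r') \<in> Phi a \<sigma> ` K \<longleftrightarrow> (\<exists>r. Inr (i,j,r) \<in> K \<and> r' = psi a \<sigma> r)" for i j r'
  proof
    assume "Inr (i,j,r') \<in> Phi a \<sigma> ` K"
    then obtain x where x: "x \<in> K" "Inr (i,j,r') = Phi a \<sigma> x" by (metis imageE)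
    show "\<exists>r. Inr (i,j,r) \<in> K \<and> r' = psi a \<sigma> r"
    proof (cases x)
      case (Inl l) then show ?thesis using x by simp
    next
      case (Inr p) then obtain i' j' r where "x = Inr (i',j',r)" by (cases p) auto
      then show ?thesis using x by auto
    qed
  next
    assume "\<exists>r. Inr (i,j,r) \<in> K \<and> r' = psi a \<sigma> r"
    then obtain r where "Inr (i,j,r) \<in> K" "r' = psi a \<sigma> r" by blast
    then show "Inr (i,j,r') \<in> Phi a \<sigma> ` K" by (metis Phi.simps(2) imageI)
  qed
  show "adjL (Phi a \<sigma> ` K) i j = adjL K i j" unfolding adjL_def * by blast
qed

lemma conn_Phi: "conn (Phi a \<sigma> ` K) v S = conn K v S"
  unfolding conn_def adjL_Phi ..

lemma mo_fcong: "\<forall>s\<in>A. f s = g s \<Longrightarrow> mo A f e = mo A g e"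
  unfolding mo_def by (rule prod.cong) auto

context tr
begin

definition \<sigma>' where "\<sigma>' = inv_into a \<sigma>"

lemma bij': "bij_betw \<sigma>' a' a" unfolding \<sigma>'_def by (rule bij_betw_inv_into[OF bij])

lemma tr': "tr a' a \<sigma>'"
  by (intro tr.intro tr_axioms.intro bij') (simp_all add: B.indep_axioms A.indep_axioms)

lemma \<sigma>\<sigma>': "s \<in> a \<Longrightarrow> \<sigma>' (\<sigma> s) = s"
  unfolding \<sigma>'_def using bij by (simp add: bij_betw_def)

lemma \<sigma>'\<sigma>'': "s \<in> a \<Longrightarrow> inv_into a' \<sigma>' s = \<sigma> s"
  unfolding \<sigma>'_def by (rule inv_into_inv_into_eq[OF bij])

lemma \<sigma>_in: "s \<in> a \<Longrightarrow> \<sigma> s \<in> a'" using bij bij_betwE by blast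

lemma psi_val: "psi a \<sigma> r = (if r \<in> a then \<sigma> r else if inverse r \<in> a then inverse (\<sigma> (inverse r)) else 1)"
  unfolding psi_def by (rule mo_eps[OF A.fin])

lemma psi_QS_cases: "r \<in> QS a \<Longrightarrow> r = 1 \<or> r \<in> a \<or> (r \<notin> a \<and> inverse r \<in> a)"
  unfolding QS_def by auto

lemma psi_QS: "r \<in> QS a \<Longrightarrow> psi a \<sigma> r \<in> QS a'"
  using psi_QS_cases[of r] A.one_notin \<sigma>_in unfolding psi_val QS_def by auto

lemma psi_inv: "r \<in> QS a \<Longrightarrow> psi a' \<sigma>' (psi a \<sigma> r) = r"
proof -
  interpret T': tr a' a \<sigma>' by (rule tr')
  assume r: "r \<in> QS a"
  consider "r = 1" | "r \<in> a" | "r \<notin> a" "inverse r \<in> a" using psi_QS_cases[OF r] by blast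
  then show ?thesis
  proof cases
    case 1 then show ?thesis using A.one_notin B.one_notin unfolding T'.psi_val psi_val by simp
  next
    case 2 then show ?thesis using \<sigma>_in \<sigma>\<sigma>' unfolding T'.psi_val psi_val by simp
  next
    case 3
    have "\<sigma> (inverse r) \<in> a'" using \<sigma>_in 3 by simp
    then have "inverse (\<sigma> (inverse r)) \<notin> a'" using B.inv_notin by blast
    then show ?thesis using 3 \<sigma>_in \<sigma>\<sigma>' \<open>\<sigma> (inverse r) \<in> a'\<close> unfolding T'.psi_val psi_val by simp
  qed
qed

lemma Phi_LD: "x \<in> LD (QS a) S \<Longrightarrow> Phi a \<sigma> x \<in> LD (QS a') S"
  by (cases x rule: lab_cases) (auto simp: psi_QS)

lemma Phi_inv: "x \<in> LD (QS a) S \<Longrightarrow> Phi a' \<sigma>' (Phi a \<sigma> x) = x"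
  by (cases x rule: lab_cases) (auto simp: psi_inv)

lemma Phi_inv2: "y \<in> LD (QS a') S \<Longrightarrow> Phi a \<sigma> (Phi a' \<sigma>' y) = y"
proof -
  interpret T': tr a' a \<sigma>' by (rule tr')
  assume y: "y \<in> LD (QS a') S"
  have "psi a (inv_into a' \<sigma>') r = psi a \<sigma> r" for r
    unfolding psi_def using \<sigma>'\<sigma>'' by (intro mo_fcong) auto
  then have "Phi a (inv_into a' \<sigma>') x = Phi a \<sigma> x" for x by (cases x rule: lab_cases) auto
  then show ?thesis using T'.Phi_inv[OF y] unfolding T'.\<sigma>'_def by simp
qed

lemma Phi_inj: "inj_on (Phi a \<sigma>) (LD (QS a) S)"
  by (metis Phi_inv inj_onI)

lemma Phi_img: "K \<subseteq> LD (QS a) S \<Longrightarrow> Phi a \<sigma> ` K \<subseteq> LD (QS a') S"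
  using Phi_LD by blast

lemma Phi_img_inv: "K' \<subseteq> LD (QS a') S \<Longrightarrow> Phi a \<sigma> ` Phi a' \<sigma>' ` K' = K'"
  using Phi_inv2 by (force simp: image_image)

lemma Q0: "\<forall>r\<in>QS a. r \<noteq> 0" using QS_pos[OF A.pos] by (metis less_irrefl)

lemma rk_Phi:
  assumes K: "K \<in> CS (QS a) k"
  shows "rk (Phi a \<sigma> ` K) = rk K"
proof (cases "k = 0")
  case True
  then have "K = {}" using K unfolding CS_def using LD_empty by auto
  then show ?thesis by simp
next
  case False
  interpret T': tr a' a \<sigma>' by (rule tr')
  have k1: "k \<ge> 1" using False by simp
  have KL: "K \<subseteq> LD (QS a) {..<k}" and cK: "conn K (k - 1) {..<k}" using K unfolding CS_def by auto
  let ?K' = "Phi a \<sigma> ` K"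
  have K'L: "?K' \<subseteq> LD (QS a') {..<k}" using Phi_img[OF KL] .
  have cK': "conn ?K' (k - 1) {..<k}" using cK conn_Phi by simp
  have v: "k - 1 \<in> {..<k}" using k1 by simp
  have bk: "Phi a' \<sigma>' ` ?K' = K" using Phi_inv KL by (force simp: image_image)
  have "unitv (k - 1) \<in> V.span (nv ` K) \<longleftrightarrow> unitv (k - 1) \<in> V.span (nv ` ?K')"
  proof
    assume "unitv (k - 1) \<in> V.span (nv ` K)"
    then show "unitv (k - 1) \<in> V.span (nv ` ?K')"
      using T'.transfer[OF finite_lessThan K'L v cK'] bk by auto
  next
    assume "unitv (k - 1) \<in> V.span (nv ` ?K')"
    then show "unitv (k - 1) \<in> V.span (nv ` K)"
      using transfer[OF finite_lessThan KL v cK] by auto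
  qed
  moreover have "rk K = k \<or> rk K + 1 = k" using rk_CS[OF Q0 QS_finite[OF A.fin] k1 K] .
  moreover have "rk ?K' = k \<or> rk ?K' + 1 = k"
    using rk_CS[OF T'.Q0 QS_finite[OF B.fin] k1] K'L cK' unfolding CS_def by blast
  ultimately show ?thesis
    using rk_char[OF Q0 QS_finite[OF A.fin] k1 KL cK] rk_char[OF T'.Q0 QS_finite[OF B.fin] k1 K'L cK'] by linarith
qed

lemma CS_Phi: "K \<in> CS (QS a) k \<Longrightarrow> Phi a \<sigma> ` K \<in> CS (QS a') k"
  unfolding CS_def using Phi_img conn_Phi by auto

lemma beta_eq: "beta (QS a) k = beta (QS a') k"
proof -
  interpret T': tr a' a \<sigma>' by (rule tr')
  let ?A = "{K\<in>CS (QS a) k. rk K \<noteq> k}" and ?B = "{K\<in>CS (QS a') k. rk K \<noteq> k}"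
  have inj: "inj_on (image (Phi a \<sigma>)) ?A"
    by (rule inj_on_subset[OF inj_on_image_Pow[OF Phi_inj[of "{..<k}"]]]) (auto simp: CS_def)
  have img: "image (Phi a \<sigma>) ` ?A = ?B"
  proof
    show "image (Phi a \<sigma>) ` ?A \<subseteq> ?B" using CS_Phi rk_Phi by auto
    show "?B \<subseteq> image (Phi a \<sigma>) ` ?A"
    proof
      fix K' assume K': "K' \<in> ?B"
      then have KL': "K' \<subseteq> LD (QS a') {..<k}" unfolding CS_def by auto
      let ?K = "Phi a' \<sigma>' ` K'"
      have KC: "?K \<in> CS (QS a) k" using T'.CS_Phi K' by auto
      have e: "Phi a \<sigma> ` ?K = K'" using Phi_img_inv[OF KL'] .
      have "rk ?K \<noteq> k" using rk_Phi[OF KC] e K' by simp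
      then show "K' \<in> image (Phi a \<sigma>) ` ?A" using KC e by (metis (mono_tags, lifting) imageI mem_Collect_eq)
    qed
  qed
  have "beta (QS a') k = (\<Sum>K\<in>image (Phi a \<sigma>) ` ?A. (-1) ^ card K)" unfolding beta_def img ..
  also have "\<dots> = (\<Sum>K\<in>?A. (-1) ^ card (Phi a \<sigma> ` K))" by (simp add: sum.reindex[OF inj] o_def)
  also have "\<dots> = beta (QS a) k" unfolding beta_def
  proof (rule sum.cong[OF refl])
    fix K assume "K \<in> ?A"
    then have "K \<subseteq> LD (QS a) {..<k}" unfolding CS_def by auto
    then have "card (Phi a \<sigma> ` K) = card K" using card_image inj_on_subset[OF Phi_inj] by blast
    then show "(-1) ^ card (Phi a \<sigma> ` K) = ((-1) ^ card K :: int)" by simp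
  qed
  finally show ?thesis by simp
qed

end

lemma indep_intro: "finite a \<Longrightarrow> (\<forall>r\<in>a. r > 0 \<and> r \<noteq> 1) \<Longrightarrow> mult_indep a \<Longrightarrow> indep a"
  by (unfold_locales) auto

theorem mainTheorem4:
  shows "(\<forall>a :: rat set. finite a \<and> (\<forall>r\<in>a. r > 0 \<and> r \<noteq> 1) \<longrightarrow>
           (\<exists>b :: nat \<Rightarrow> int. char_egf a = fps_exp_of (b_series b)))
       \<and> (\<exists>\<beta> :: nat \<Rightarrow> nat \<Rightarrow> int. \<forall>a :: rat set.
           finite a \<and> (\<forall>r\<in>a. r > 0 \<and> r \<noteq> 1) \<and> mult_indep a \<longrightarrow>
           char_egf a = fps_exp_of (b_series (\<beta> (card a))))"
proof
  show "\<forall>a :: rat set. finite a \<and> (\<forall>r\<in>a. r > 0 \<and> r \<noteq> 1) \<longrightarrow>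
           (\<exists>b :: nat \<Rightarrow> int. char_egf a = fps_exp_of (b_series b))"
    using part1 by blast
  define G where "G m = (SOME a0 :: rat set. finite a0 \<and> (\<forall>r\<in>a0. r > 0 \<and> r \<noteq> 1) \<and> mult_indep a0 \<and> card a0 = m)" for m
  define \<beta> where "\<beta> m = beta (QS (G m))" for m
  show "\<exists>\<beta> :: nat \<Rightarrow> nat \<Rightarrow> int. \<forall>a :: rat set.
           finite a \<and> (\<forall>r\<in>a. r > 0 \<and> r \<noteq> 1) \<and> mult_indep a \<longrightarrow>
           char_egf a = fps_exp_of (b_series (\<beta> (card a)))"
  proof (intro exI[of _ \<beta>] allI impI)
    fix a :: "rat set"
    assume h: "finite a \<and> (\<forall>r\<in>a. r > 0 \<and> r \<noteq> 1) \<and> mult_indep a"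
    let ?a0 = "G (card a)"
    have ex: "\<exists>a0 :: rat set. finite a0 \<and> (\<forall>r\<in>a0. r > 0 \<and> r \<noteq> 1) \<and> mult_indep a0 \<and> card a0 = card a"
      using h by blast
    have a0: "finite ?a0 \<and> (\<forall>r\<in>?a0. r > 0 \<and> r \<noteq> 1) \<and> mult_indep ?a0 \<and> card ?a0 = card a"
      unfolding G_def by (rule someI_ex[OF ex])
    obtain \<sigma> where \<sigma>: "bij_betw \<sigma> a ?a0"
      using finite_same_card_bij[of a ?a0] h a0 by metis
    have ia: "indep a" using h by (intro indep_intro) auto
    have ia0: "indep ?a0" using a0 by (intro indep_intro) auto
    interpret T: tr a ?a0 \<sigma>
      by (intro tr.intro tr_axioms.intro ia ia0 \<sigma>)
    have "beta (QS a) = \<beta> (card a)" unfolding \<beta>_def using T.beta_eq by (intro ext) simp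
    then show "char_egf a = fps_exp_of (b_series (\<beta> (card a)))"
      using part1[of a] h by simp
  qed
qed

end
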